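(* Let $I=(0,T)$ with $T>0$ and $r\in\mathbb N\cup\{0\}$. There exist $\gamma>0$ and a sequence $(\alpha_j)_{j\in\mathbb N}\subset C_c^\infty(I)$ such that $$0<\gamma\le\|\alpha_j\|_{W^{r,\infty}(I)}\le1\quad\text{for all } j\in\mathbb N,$$ and $\alpha_j\cdot\phi\to0$ in $H^m(I)$ as $j\to\infty$ for every fixed $\phi\in H^m(I)$ and every $m=0,\dots,r$.
   Context: $W^{r,\infty}(I)$ and $H^m(I)=W^{m,2}(I)$ are the usual Sobolev spaces of real functions on the interval $I$; $C_c^\infty(I)$ denotes smooth functions with compact support in $I$. *)

theory Defs
  imports "HOL-Analysis.Analysis"
begin

definition test_fun :: "real set \<Rightarrow> (real \<Rightarrow> real) \<Rightarrow> bool" where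
  "test_fun I f \<longleftrightarrow>
     (\<forall>k. \<forall>x\<in>I. ((deriv ^^ k) f) differentiable (at x)) \<and>
     compact (closure {x\<in>I. f x \<noteq> 0}) \<and> closure {x\<in>I. f x \<noteq> 0} \<subseteq> I"

text \<open>W^{r,\<infinity>}(I) norm of a smooth function: sum over k \<le> r of sup norms of the
  classical derivatives on I (for smooth functions the essential sup equals the sup).\<close>
definition W_inf_norm :: "real set \<Rightarrow> nat \<Rightarrow> (real \<Rightarrow> real) \<Rightarrow> real" where
  "W_inf_norm I r f = (\<Sum>k\<le>r. (SUP x\<in>I. \<bar>(deriv ^^ k) f x\<bar>))"

definition L2_on :: "real set \<Rightarrow> (real \<Rightarrow> real) \<Rightarrow> bool" where
  "L2_on I f \<longleftrightarrow> f \<in> borel_measurable (restrict_space lebesgue I) \<and>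
     set_integrable lebesgue I (\<lambda>x. (f x)^2)"

definition weak_deriv_of :: "real set \<Rightarrow> nat \<Rightarrow> (real \<Rightarrow> real) \<Rightarrow> (real \<Rightarrow> real) \<Rightarrow> bool" where
  "weak_deriv_of I k f g \<longleftrightarrow>
     (\<forall>\<psi>. test_fun I \<psi> \<longrightarrow>
        set_integrable lebesgue I (\<lambda>x. f x * (deriv ^^ k) \<psi> x) \<and>
        set_integrable lebesgue I (\<lambda>x. g x * \<psi> x) \<and>
        (LINT x:I|lebesgue. f x * (deriv ^^ k) \<psi> x) = (-1)^k * (LINT x:I|lebesgue. g x * \<psi> x))"

definition in_Hm :: "real set \<Rightarrow> nat \<Rightarrow> (real \<Rightarrow> real) \<Rightarrow> bool" where
  "in_Hm I m f \<longleftrightarrow> L2_on I f \<and> (\<forall>k\<le>m. \<exists>g. L2_on I g \<and> weak_deriv_of I k f g)"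

definition weak_deriv :: "real set \<Rightarrow> nat \<Rightarrow> (real \<Rightarrow> real) \<Rightarrow> real \<Rightarrow> real" where
  "weak_deriv I k f = (SOME g. L2_on I g \<and> weak_deriv_of I k f g)"

definition Hm_norm :: "real set \<Rightarrow> nat \<Rightarrow> (real \<Rightarrow> real) \<Rightarrow> real" where
  "Hm_norm I m f = sqrt (\<Sum>k\<le>m. (LINT x:I|lebesgue. (weak_deriv I k f x)^2))"

end

theory Submission
  imports Defs "HOL-Computational_Algebra.Polynomial"
begin

definition sfam :: "real set \<Rightarrow> (nat \<Rightarrow> real \<Rightarrow> real) \<Rightarrow> bool" where
  "sfam U D \<longleftrightarrow> (\<forall>k. \<forall>x\<in>U. (D k has_real_derivative D (Suc k) x) (at x))"

lemma sfam_deriv: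
  assumes "open U" "sfam U D"
  shows "\<forall>x\<in>U. (deriv ^^ k) (D 0) x = D k x"
proof (induction k)
  case 0 then show ?case by simp
next
  case (Suc k)
  show ?case
  proof
    fix x assume x: "x \<in> U"
    have "(D k has_real_derivative D (Suc k) x) (at x)" using assms x unfolding sfam_def by blast
    then have "((deriv ^^ k) (D 0) has_real_derivative D (Suc k) x) (at x)"
      by (rule has_field_derivative_transform_within_open[OF _ assms(1) x]) (use Suc in auto)
    then show "(deriv ^^ Suc k) (D 0) x = D (Suc k) x" by (simp add: DERIV_imp_deriv)
  qed
qed

lemma sfam_differentiable:
  assumes "open U" "sfam U D" "x \<in> U"
  shows "(deriv ^^ k) (D 0) differentiable (at x)"
proof -
  have "(D k has_real_derivative D (Suc k) x) (at x)" using assms unfolding sfam_def by blast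
  then have "((deriv ^^ k) (D 0) has_real_derivative D (Suc k) x) (at x)"
    by (rule has_field_derivative_transform_within_open[OF _ assms(1) assms(3)]) (use sfam_deriv[OF assms(1,2)] in auto)
  then show ?thesis using real_differentiable_def by blast
qed

lemma leibniz_step:
  fixes a b :: "nat \<Rightarrow> real"
  shows "(\<Sum>i\<le>k. real (k choose i) * (a (Suc i) * b (k - i) + a i * b (Suc (k - i))))
       = (\<Sum>i\<le>Suc k. real (Suc k choose i) * (a i * b (Suc k - i)))"
proof -
  have "(\<Sum>i\<le>Suc k. real (Suc k choose i) * (a i * b (Suc k - i)))
      = a 0 * b (Suc k) + (\<Sum>i\<le>k. real (Suc k choose Suc i) * (a (Suc i) * b (k - i)))"
    by (subst sum.atMost_Suc_shift) simp
  also have "(\<Sum>i\<le>k. real (Suc k choose Suc i) * (a (Suc i) * b (k - i)))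
      = (\<Sum>i\<le>k. real (k choose i) * (a (Suc i) * b (k - i)))
        + (\<Sum>i\<le>k. real (k choose Suc i) * (a (Suc i) * b (k - i)))"
    by (simp add: sum.distrib[symmetric] algebra_simps)
  also have "(\<Sum>i\<le>k. real (k choose Suc i) * (a (Suc i) * b (k - i)))
      = (\<Sum>i\<le>Suc k. real (k choose i) * (a i * b (Suc k - i))) - a 0 * b (Suc k)"
    by (subst sum.atMost_Suc_shift) simp
  also have "(\<Sum>i\<le>Suc k. real (k choose i) * (a i * b (Suc k - i)))
      = (\<Sum>i\<le>k. real (k choose i) * (a i * b (Suc (k - i))))"
    by (simp add: Suc_diff_le)
  finally show ?thesis
    by (simp add: sum.distrib algebra_simps)
qed

definition pfam :: "(nat \<Rightarrow> real \<Rightarrow> real) \<Rightarrow> (nat \<Rightarrow> real \<Rightarrow> real) \<Rightarrow> nat \<Rightarrow> real \<Rightarrow> real" where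
  "pfam D E k x = (\<Sum>i\<le>k. real (k choose i) * (D i x * E (k - i) x))"

lemma pfam_0[simp]: "pfam D E 0 x = D 0 x * E 0 x"
  by (simp add: pfam_def)

lemma sfam_mult:
  assumes "sfam U D" "sfam U E"
  shows "sfam U (pfam D E)"
  unfolding sfam_def
proof (intro allI ballI)
  fix k x assume x: "x \<in> U"
  have dD: "\<And>i. (D i has_real_derivative D (Suc i) x) (at x)" and dE: "\<And>i. (E i has_real_derivative E (Suc i) x) (at x)"
    using assms x unfolding sfam_def by auto
  have "((\<lambda>x. \<Sum>i\<le>k. real (k choose i) * (D i x * E (k - i) x)) has_real_derivative
        (\<Sum>i\<le>k. real (k choose i) * (D (Suc i) x * E (k - i) x + D i x * E (Suc (k - i)) x))) (at x)"
  proof (intro DERIV_sum DERIV_cmult)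
    fix n
    show "((\<lambda>x. D n x * E (k - n) x) has_real_derivative
          D (Suc n) x * E (k - n) x + D n x * E (Suc (k - n)) x) (at x)"
      using DERIV_mult[OF dD[of n] dE[of "k-n"]] by (simp add: algebra_simps)
  qed
  then show "(pfam D E k has_real_derivative pfam D E (Suc k) x) (at x)"
    unfolding pfam_def using leibniz_step[of k "\<lambda>i. D i x" "\<lambda>i. E i x"] by (simp add: fun_eq_iff)
qed

definition afam :: "real \<Rightarrow> real \<Rightarrow> real \<Rightarrow> (nat \<Rightarrow> real \<Rightarrow> real) \<Rightarrow> nat \<Rightarrow> real \<Rightarrow> real" where
  "afam c a b D k x = c * a ^ k * D k (a * x + b)"

lemma sfam_affine:
  assumes "sfam UNIV D"
  shows "sfam UNIV (afam c a b D)"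
  unfolding sfam_def afam_def
proof (intro allI ballI)
  fix k and x :: real
  have d: "(D k has_real_derivative D (Suc k) (a * x + b)) (at (a * x + b))"
    using assms unfolding sfam_def by auto
  have "((\<lambda>x. c * a ^ k * D k (a * x + b)) has_real_derivative c * a ^ k * (D (Suc k) (a * x + b) * a)) (at x)"
    by (intro DERIV_cmult DERIV_chain2[of "D k" _ "\<lambda>x. a*x+b", OF d]) (auto intro!: derivative_eq_intros)
  then show "((\<lambda>x. c * a ^ k * D k (a * x + b)) has_real_derivative c * a ^ Suc k * D (Suc k) (a * x + b)) (at x)"
    by (simp add: algebra_simps)
qed

lemma poly_exp_at_top: "((\<lambda>u. poly q u * exp (- u)) \<longlongrightarrow> (0::real)) at_top"
proof -
  have "((\<lambda>u. \<Sum>i\<le>degree q. coeff q i * (u ^ i / exp u)) \<longlongrightarrow> (\<Sum>i\<le>degree q. coeff q i * 0)) at_top"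
    by (intro tendsto_intros tendsto_power_div_exp_0)
  then show ?thesis
    by (simp add: poly_altdef sum_divide_distrib exp_minus field_simps)
qed

lemma poly_exp_at_right: "((\<lambda>y. poly q (1 / y) * exp (- (1 / y))) \<longlongrightarrow> (0::real)) (at_right 0)"
proof -
  have "((\<lambda>y. poly q (inverse y) * exp (- inverse y)) \<longlongrightarrow> (0::real)) (at_right 0)"
    using filterlim_compose[OF poly_exp_at_top filterlim_inverse_at_top_right] by simp
  then show ?thesis by (simp add: divide_inverse)
qed

primrec Pk :: "nat \<Rightarrow> real poly" where
  "Pk 0 = 1"
| "Pk (Suc k) = [:0, 0, 1:] * (Pk k - pderiv (Pk k))"

definition efam :: "nat \<Rightarrow> real \<Rightarrow> real" where
  "efam k t = (if t > 0 then poly (Pk k) (1 / t) * exp (- (1 / t)) else 0)"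

lemma efam_deriv_pos:
  assumes t: "t > 0"
  shows "((\<lambda>t. poly p (1 / t) * exp (- (1 / t))) has_real_derivative
          poly ([:0, 0, 1:] * (p - pderiv p)) (1 / t) * exp (- (1 / t))) (at t)"
proof -
  have "((\<lambda>t. poly p (1 / t) * exp (- (1 / t))) has_real_derivative
     (poly (pderiv p) (1 / t) * (- 1 / t^2)) * exp (- (1 / t)) + poly p (1 / t) * (exp (- (1 / t)) * (1 / t^2))) (at t)"
    using t
    by (auto intro!: derivative_eq_intros DERIV_chain2[of "poly p", OF poly_DERIV] simp: power2_eq_square field_simps)
  then show ?thesis
    by (rule DERIV_cong) (use t in \<open>simp add: power2_eq_square field_simps\<close>)
qed

lemma sfam_efam: "sfam UNIV efam"
  unfolding sfam_def
proof (intro allI ballI)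
  fix k and t :: real
  show "(efam k has_real_derivative efam (Suc k) t) (at t)"
  proof (cases "t > 0")
    case True
    have "((\<lambda>t. poly (Pk k) (1 / t) * exp (- (1 / t))) has_real_derivative efam (Suc k) t) (at t)"
      using efam_deriv_pos[OF True, of "Pk k"] True by (simp add: efam_def)
    then show ?thesis
      by (rule has_field_derivative_transform_within_open[of _ _ _ "{0<..}"]) (use True in \<open>auto simp: efam_def\<close>)
  next
    case False
    show ?thesis
    proof (cases "t < 0")
      case True
      have "((\<lambda>_. 0) has_real_derivative efam (Suc k) t) (at t)"
        using True by (simp add: efam_def)
      then show ?thesis
        by (rule has_field_derivative_transform_within_open[of _ _ _ "{..<0}"]) (use True in \<open>auto simp: efam_def\<close>)
    next
      case False
      with \<open>\<not> t > 0\<close> have t0: "t = 0" by simp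
      have "((\<lambda>y. (efam k y - efam k 0) / (y - 0)) \<longlongrightarrow> 0) (at 0)"
      proof (rule filterlim_split_at)
        show "((\<lambda>y. (efam k y - efam k 0) / (y - 0)) \<longlongrightarrow> 0) (at_left 0)"
        proof (rule Lim_transform_eventually[OF tendsto_const])
          show "\<forall>\<^sub>F x in at_left 0. 0 = (efam k x - efam k 0) / (x - 0)"
            unfolding eventually_at_filter by (auto simp: efam_def)
        qed
        show "((\<lambda>y. (efam k y - efam k 0) / (y - 0)) \<longlongrightarrow> 0) (at_right 0)"
        proof (rule Lim_transform_eventually[OF poly_exp_at_right[of "pCons 0 (Pk k)"]])
          show "\<forall>\<^sub>F x in at_right 0. poly (pCons 0 (Pk k)) (1 / x) * exp (- (1 / x)) = (efam k x - efam k 0) / (x - 0)"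
            unfolding eventually_at_filter by (auto simp: efam_def)
        qed
      qed
      then have "(efam k has_real_derivative 0) (at 0)"
        by (simp add: has_field_derivative_iff)
      then show ?thesis using t0 by (simp add: efam_def)
    qed
  qed
qed

definition bfam :: "nat \<Rightarrow> real \<Rightarrow> real" where
  "bfam = pfam efam (afam 1 (-1) 1 efam)"

lemma sfam_bfam: "sfam UNIV bfam"
  unfolding bfam_def by (intro sfam_mult sfam_affine sfam_efam)

lemma bfam0: "bfam 0 t = (if 0 < t \<and> t < 1 then exp (- (1 / t)) * exp (- (1 / (1 - t))) else 0)"
  by (simp add: bfam_def afam_def efam_def)

lemma bfam0_pos: "0 < t \<Longrightarrow> t < 1 \<Longrightarrow> bfam 0 t > 0"
  by (simp add: bfam0)

lemma bfam0_nonneg: "bfam 0 t \<ge> 0"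
  by (simp add: bfam0)

lemma bfam0_ne: "bfam 0 t \<noteq> 0 \<longleftrightarrow> 0 < t \<and> t < 1"
  by (simp add: bfam0)

lemma bfam_out: "t \<le> 0 \<or> t \<ge> 1 \<Longrightarrow> bfam k t = 0"
  by (auto simp: bfam_def pfam_def afam_def efam_def intro!: sum.neutral)

lemma sfam_cont: "sfam UNIV D \<Longrightarrow> continuous_on S (D k)"
  unfolding sfam_def by (meson DERIV_isCont UNIV_I continuous_at_imp_continuous_on)

lemma bfam_bounded: "\<exists>M. \<forall>t. \<bar>bfam k t\<bar> \<le> M"
proof -
  have "compact (bfam k ` {0..1})"
    by (intro compact_continuous_image sfam_cont[OF sfam_bfam]) auto
  then obtain M where M: "\<forall>y\<in>bfam k ` {0..1}. norm y \<le> M"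
    using compact_imp_bounded bounded_iff by blast
  have "\<bar>bfam k t\<bar> \<le> max M 0" for t
  proof (cases "0 \<le> t \<and> t \<le> 1")
    case True then show ?thesis using M by force
  next
    case False then show ?thesis using bfam_out[of t k] by auto
  qed
  then show ?thesis by blast
qed

lemma sfam_zero_down:
  assumes "sfam UNIV D" "\<forall>t. D (Suc k) t = 0" "D k c = 0"
  shows "\<forall>t. D k t = 0"
proof
  fix t
  have "\<forall>x. DERIV (D k) x :> 0" using assms unfolding sfam_def by (metis UNIV_I)
  then have "D k t = D k c" by (rule DERIV_isconst_all)
  then show "D k t = 0" using assms by simp
qed

lemma bfam_nonzero: "\<exists>t. bfam r t \<noteq> 0"
proof (rule ccontr)
  assume "\<not> ?thesis"
  then have z: "\<forall>t. bfam r t = 0" by auto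
  have "\<forall>t. bfam (r - j) t = 0" if "j \<le> r" for j
    using that
  proof (induction j)
    case 0 then show ?case using z by simp
  next
    case (Suc j)
    then have "\<forall>t. bfam (Suc (r - Suc j)) t = 0" using Suc_diff_Suc[of j r] by auto
    then show ?case using sfam_zero_down[OF sfam_bfam, of "r - Suc j" "-1"] bfam_out[of "-1"] by auto
  qed
  from this[of r] have "bfam 0 (1/2) = 0" by auto
  then show False using bfam0_pos[of "1/2"] by simp
qed

definition cS :: real where "cS = integral {0..1} (bfam 0)"

lemma bfam0_integrable: "bfam 0 integrable_on {a..b}"
  by (intro integrable_continuous_interval sfam_cont[OF sfam_bfam])

lemma cS_pos: "cS > 0"
proof -
  have "0 \<le> cS" unfolding cS_def
    by (rule Henstock_Kurzweil_Integration.integral_nonneg[OF bfam0_integrable]) (simp add: bfam0_nonneg)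
  moreover have "cS \<noteq> 0"
  proof
    assume "cS = 0"
    then have "\<forall>x\<in>{0..1}. bfam 0 x = 0" unfolding cS_def
      by (subst (asm) integral_eq_0_iff) (auto intro: sfam_cont[OF sfam_bfam] bfam0_nonneg)
    then show False using bfam0_pos[of "1/2"] by auto
  qed
  ultimately show ?thesis by simp
qed

lemma integral_shift_left:
  assumes "a \<le> 0"
  shows "integral {a..u} (bfam 0) = integral {0..u} (bfam 0)"
proof (cases "u < 0")
  case True
  have "integral {a..u} (bfam 0) = integral {a..u} (\<lambda>_. 0)"
    by (rule integral_cong) (use True bfam_out in auto)
  then show ?thesis using True by simp
next
  case False
  have "integral {a..0} (bfam 0) + integral {0..u} (bfam 0) = integral {a..u} (bfam 0)"
    by (rule Henstock_Kurzweil_Integration.integral_combine) (use assms False bfam0_integrable in auto)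
  moreover have "integral {a..0} (bfam 0) = integral {a..0} (\<lambda>_. 0)"
    by (rule integral_cong) (use bfam_out in auto)
  ultimately show ?thesis by simp
qed

definition Sfun :: "real \<Rightarrow> real" where
  "Sfun t = integral {0..t} (bfam 0) / cS"

lemma Sfun_deriv: "(Sfun has_real_derivative bfam 0 x / cS) (at x)"
proof -
  define a where "a = - (\<bar>x\<bar> + 1)"
  define b where "b = \<bar>x\<bar> + 1"
  have "((\<lambda>u. integral {a..u} (bfam 0)) has_vector_derivative bfam 0 x) (at x within {a..b})"
    by (rule integral_has_vector_derivative) (auto simp: a_def b_def intro: sfam_cont[OF sfam_bfam])
  moreover have "at x within {a..b} = at x"
    by (rule at_within_interior) (auto simp: a_def b_def)
  moreover have "(\<lambda>u. integral {a..u} (bfam 0)) = (\<lambda>u. integral {0..u} (bfam 0))"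
    using integral_shift_left[of a] by (auto simp: a_def)
  ultimately have "((\<lambda>u. integral {0..u} (bfam 0)) has_real_derivative bfam 0 x) (at x)"
    by (simp add: has_real_derivative_iff_has_vector_derivative)
  then show ?thesis unfolding Sfun_def by (intro DERIV_cdivide)
qed

definition Sfam :: "nat \<Rightarrow> real \<Rightarrow> real" where
  "Sfam k t = (case k of 0 \<Rightarrow> Sfun t | Suc j \<Rightarrow> bfam j t / cS)"

lemma sfam_Sfam: "sfam UNIV Sfam"
  unfolding sfam_def
proof (intro allI ballI)
  fix k and x :: real
  show "(Sfam k has_real_derivative Sfam (Suc k) x) (at x)"
  proof (cases k)
    case 0
    then show ?thesis using Sfun_deriv[of x] by (simp add: Sfam_def[abs_def])
  next
    case (Suc j)
    have "(bfam j has_real_derivative bfam (Suc j) x) (at x)" using sfam_bfam unfolding sfam_def by auto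
    then have "((\<lambda>t. bfam j t / cS) has_real_derivative bfam (Suc j) x / cS) (at x)"
      by (intro DERIV_cdivide)
    then show ?thesis using Suc by (simp add: Sfam_def[abs_def])
  qed
qed

lemma Sfun_le0: "t \<le> 0 \<Longrightarrow> Sfun t = 0"
  by (cases "t = 0") (auto simp: Sfun_def)

lemma Sfun_ge1: "t \<ge> 1 \<Longrightarrow> Sfun t = 1"
proof -
  assume t: "t \<ge> 1"
  have "integral {0..1} (bfam 0) + integral {1..t} (bfam 0) = integral {0..t} (bfam 0)"
    by (rule Henstock_Kurzweil_Integration.integral_combine) (use t bfam0_integrable in auto)
  moreover have "integral {1..t} (bfam 0) = integral {1..t} (\<lambda>_. 0)"
    by (rule integral_cong) (use bfam_out in auto)
  ultimately show ?thesis using cS_pos by (simp add: Sfun_def cS_def)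
qed

lemma Sfun_range: "0 \<le> Sfun t \<and> Sfun t \<le> 1"
proof (cases "t \<le> 0")
  case True then show ?thesis by (simp add: Sfun_le0)
next
  case False
  show ?thesis
  proof (cases "t \<ge> 1")
    case True then show ?thesis by (simp add: Sfun_ge1)
  next
    case False
    have "integral {0..t} (bfam 0) + integral {t..1} (bfam 0) = integral {0..1} (bfam 0)"
      by (rule Henstock_Kurzweil_Integration.integral_combine) (use \<open>\<not> t \<le> 0\<close> False bfam0_integrable in auto)
    moreover have "0 \<le> integral {t..1} (bfam 0)" "0 \<le> integral {0..t} (bfam 0)"
      by (rule Henstock_Kurzweil_Integration.integral_nonneg[OF bfam0_integrable], simp add: bfam0_nonneg)+
    ultimately show ?thesis using cS_pos by (simp add: Sfun_def cS_def field_simps)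
  qed
qed

abbreviation "Iv T \<equiv> {0<..<(T::real)}"

lemma Iv_sets[simp]: "Iv T \<in> sets lebesgue" by simp

lemma set_integrable_on: fixes f :: "real \<Rightarrow> real" shows "set_integrable lebesgue (Iv T) f \<longleftrightarrow> integrable (lebesgue_on (Iv T)) f"
  unfolding set_integrable_def using integrable_restrict_space[of "Iv T" lebesgue f] by simp

lemma set_integral_on: fixes f :: "real \<Rightarrow> real" shows "(LINT x:Iv T|lebesgue. f x) = integral\<^sup>L (lebesgue_on (Iv T)) f"
  unfolding set_lebesgue_integral_def using integral_restrict_space[of "Iv T" lebesgue f] by simp

lemma L2_on_iff: "L2_on (Iv T) f \<longleftrightarrow> f \<in> borel_measurable (lebesgue_on (Iv T)) \<and> integrable (lebesgue_on (Iv T)) (\<lambda>x. (f x)^2)"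
  unfolding L2_on_def set_integrable_on ..

lemma finite_Iv: "T > 0 \<Longrightarrow> finite_measure (lebesgue_on (Iv T))"
  by (rule finite_measureI) (simp add: emeasure_restrict_space)

definition bm :: "real set \<Rightarrow> (real \<Rightarrow> real) \<Rightarrow> bool" where
  "bm I b \<longleftrightarrow> b \<in> borel_measurable (lebesgue_on I) \<and> (\<exists>B. \<forall>x\<in>I. \<bar>b x\<bar> \<le> B)"

lemma L2_mult_integrable:
  assumes "L2_on (Iv T) f" "L2_on (Iv T) g"
  shows "integrable (lebesgue_on (Iv T)) (\<lambda>x. f x * g x)"
proof -
  have m: "f \<in> borel_measurable (lebesgue_on (Iv T))" "g \<in> borel_measurable (lebesgue_on (Iv T))"
    and i: "integrable (lebesgue_on (Iv T)) (\<lambda>x. (f x)^2)" "integrable (lebesgue_on (Iv T)) (\<lambda>x. (g x)^2)"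
    using assms by (auto simp: L2_on_iff)
  show ?thesis
  proof (rule Bochner_Integration.integrable_bound[of _ "\<lambda>x. (f x)^2 + (g x)^2"])
    show "integrable (lebesgue_on (Iv T)) (\<lambda>x. (f x)^2 + (g x)^2)" using i by auto
    show "(\<lambda>x. f x * g x) \<in> borel_measurable (lebesgue_on (Iv T))" using m by auto
    show "AE x in lebesgue_on (Iv T). norm (f x * g x) \<le> norm ((f x)^2 + (g x)^2)"
    proof (rule AE_I2)
      fix x
      have "\<bar>f x * g x\<bar> \<le> (f x)^2 + (g x)^2"
      proof -
        have "0 \<le> \<bar>f x\<bar> * \<bar>g x\<bar>" by simp
        moreover have "2 * \<bar>f x\<bar> * \<bar>g x\<bar> \<le> (f x)^2 + (g x)^2"
          using sum_squares_bound[of "\<bar>f x\<bar>" "\<bar>g x\<bar>"] by simp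
        moreover have "\<bar>f x * g x\<bar> = \<bar>f x\<bar> * \<bar>g x\<bar>" by (rule abs_mult)
        ultimately show ?thesis by linarith
      qed
      then show "norm (f x * g x) \<le> norm ((f x)^2 + (g x)^2)" by simp
    qed
  qed
qed

lemma L2_mult_integrable':
  assumes "L2_on (Iv T) f" "L2_on (Iv T) g"
  shows "set_integrable lebesgue (Iv T) (\<lambda>x. f x * g x)"
  using L2_mult_integrable[OF assms] by (simp add: set_integrable_on)

lemma bm_L2:
  assumes "bm (Iv T) b" "L2_on (Iv T) f"
  shows "L2_on (Iv T) (\<lambda>x. b x * f x)"
proof -
  obtain B where B: "\<forall>x\<in>Iv T. \<bar>b x\<bar> \<le> B" and mb: "b \<in> borel_measurable (lebesgue_on (Iv T))"
    using assms unfolding bm_def by auto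
  have m: "f \<in> borel_measurable (lebesgue_on (Iv T))" and i: "integrable (lebesgue_on (Iv T)) (\<lambda>x. (f x)^2)"
    using assms by (auto simp: L2_on_iff)
  have "integrable (lebesgue_on (Iv T)) (\<lambda>x. (b x * f x)^2)"
  proof (rule Bochner_Integration.integrable_bound[of _ "\<lambda>x. B^2 * (f x)^2"])
    show "integrable (lebesgue_on (Iv T)) (\<lambda>x. B^2 * (f x)^2)" using i by auto
    show "(\<lambda>x. (b x * f x)^2) \<in> borel_measurable (lebesgue_on (Iv T))" using m mb by auto
    show "AE x in lebesgue_on (Iv T). norm ((b x * f x)^2) \<le> norm (B^2 * (f x)^2)"
    proof (rule AE_I2)
      fix x assume "x \<in> space (lebesgue_on (Iv T))"
      then have "\<bar>b x\<bar> \<le> B" using B by auto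
      then have "\<bar>b x\<bar> \<le> \<bar>B\<bar>" by simp
      then have "(b x)^2 \<le> B^2" by (simp add: abs_le_square_iff)
      then have "(b x)^2 * (f x)^2 \<le> B^2 * (f x)^2" by (simp add: mult_right_mono)
      then show "norm ((b x * f x)^2) \<le> norm (B^2 * (f x)^2)" by (simp add: power_mult_distrib)
    qed
  qed
  then show ?thesis using m mb by (simp add: L2_on_iff)
qed

lemma bm_L2_self:
  assumes "T > 0" "bm (Iv T) b"
  shows "L2_on (Iv T) b"
proof -
  interpret finite_measure "lebesgue_on (Iv T)" using finite_Iv[OF assms(1)] .
  obtain B where B: "\<forall>x\<in>Iv T. \<bar>b x\<bar> \<le> B" and mb: "b \<in> borel_measurable (lebesgue_on (Iv T))"
    using assms unfolding bm_def by auto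
  have "integrable (lebesgue_on (Iv T)) (\<lambda>x. (b x)^2)"
  proof (rule integrable_const_bound[where B="B^2"])
    show "AE x in lebesgue_on (Iv T). norm ((b x)^2) \<le> B^2"
    proof (rule AE_I2)
      fix x assume "x \<in> space (lebesgue_on (Iv T))"
      then have "\<bar>b x\<bar> \<le> B" using B by auto
      then have "\<bar>b x\<bar> \<le> \<bar>B\<bar>" by simp
      then show "norm ((b x)^2) \<le> B^2" by (simp add: abs_le_square_iff)
    qed
  qed (use mb in auto)
  then show ?thesis using mb by (simp add: L2_on_iff)
qed

lemma supp_sub:
  assumes "compact (closure {x\<in>I. f x \<noteq> 0})" "closure {x\<in>I. f x \<noteq> 0} \<subseteq> I"
    and "{x\<in>I. g x \<noteq> 0} \<subseteq> closure {x\<in>I. f x \<noteq> 0}"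
  shows "compact (closure {x\<in>I. g x \<noteq> 0}) \<and> closure {x\<in>I. g x \<noteq> 0} \<subseteq> I"
proof -
  have sub: "closure {x\<in>I. g x \<noteq> 0} \<subseteq> closure {x\<in>I. f x \<noteq> 0}"
    by (rule closure_minimal[OF assms(3)]) simp
  have "compact (closure {x\<in>I. f x \<noteq> 0} \<inter> closure {x\<in>I. g x \<noteq> 0})"
    using compact_Int_closed[OF assms(1) closed_closure] .
  then have "compact (closure {x\<in>I. g x \<noteq> 0})" using sub by (simp add: Int_absorb1)
  then show ?thesis using sub assms(2) by blast
qed

lemma test_fun_zero_outside:
  assumes "test_fun I f" "x \<in> I" "x \<notin> closure {x\<in>I. f x \<noteq> 0}"
  shows "f x = 0"
proof (rule ccontr)
  assume "f x \<noteq> 0"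
  then have "x \<in> {x\<in>I. f x \<noteq> 0}" using assms(2) by simp
  then show False using assms(3) closure_subset[of "{x\<in>I. f x \<noteq> 0}"] by blast
qed

lemma funpow_deriv_Suc: "(deriv ^^ k) (deriv f) = (deriv ^^ Suc k) f"
  by (metis comp_apply funpow_Suc_right)

lemma test_fun_deriv:
  assumes "open I" "test_fun I f"
  shows "test_fun I (deriv f)"
proof -
  let ?K = "closure {x\<in>I. f x \<noteq> 0}"
  have tf: "(\<forall>k. \<forall>x\<in>I. ((deriv ^^ k) f) differentiable (at x)) \<and> compact ?K \<and> ?K \<subseteq> I"
    using assms(2) unfolding test_fun_def .
  then have K1: "compact ?K" and K2: "?K \<subseteq> I" and d: "\<forall>k. \<forall>x\<in>I. ((deriv ^^ k) f) differentiable (at x)"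
    by blast+
  have "{x\<in>I. deriv f x \<noteq> 0} \<subseteq> ?K"
  proof
    fix x assume x: "x \<in> {x\<in>I. deriv f x \<noteq> 0}"
    show "x \<in> ?K"
    proof (rule ccontr)
      assume nK: "x \<notin> ?K"
      have "(f has_real_derivative 0) (at x)"
      proof (rule has_field_derivative_transform_within_open[of "\<lambda>_. 0" 0 x "I - ?K"])
        show "open (I - ?K)" using assms(1) by (simp add: open_Diff)
        show "x \<in> I - ?K" using x nK by simp
        show "0 = f y" if y: "y \<in> I - ?K" for y
        proof (rule ccontr)
          assume "0 \<noteq> f y"
          then have "y \<in> {x\<in>I. f x \<noteq> 0}" using y by auto
          then have "y \<in> ?K" using closure_subset[of "{x\<in>I. f x \<noteq> 0}"] by (rule subsetD[rotated])
          then show False using y by simp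
        qed
      qed simp
      then have "deriv f x = 0" by (rule DERIV_imp_deriv)
      then show False using x by simp
    qed
  qed
  then have s: "compact (closure {x\<in>I. deriv f x \<noteq> 0}) \<and> closure {x\<in>I. deriv f x \<noteq> 0} \<subseteq> I"
    by (rule supp_sub[OF K1 K2])
  have "\<forall>k. \<forall>x\<in>I. ((deriv ^^ k) (deriv f)) differentiable (at x)"
    unfolding funpow_deriv_Suc using d by blast
  with s show ?thesis unfolding test_fun_def by blast
qed

lemma test_fun_sfam:
  assumes "test_fun I f"
  shows "sfam I (\<lambda>k. (deriv ^^ k) f)"
  unfolding sfam_def
proof (intro allI ballI)
  fix k x assume "x \<in> I"
  then have "(deriv ^^ k) f differentiable (at x)" using assms unfolding test_fun_def by blast
  then show "((deriv ^^ k) f has_real_derivative (deriv ^^ Suc k) f x) (at x)"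
    by (simp add: DERIV_deriv_iff_real_differentiable[symmetric])
qed

lemma sfam_mono: "sfam U D \<Longrightarrow> V \<subseteq> U \<Longrightarrow> sfam V D"
  unfolding sfam_def by blast

lemma test_fun_mult:
  assumes "open I" "sfam UNIV A" "test_fun I f"
  shows "test_fun I (\<lambda>x. A 0 x * f x)"
proof -
  let ?P = "pfam A (\<lambda>k. (deriv ^^ k) f)"
  have sP: "sfam I ?P"
    by (rule sfam_mult[OF sfam_mono[OF assms(2)] test_fun_sfam[OF assms(3)]]) simp
  have P0: "?P 0 = (\<lambda>x. A 0 x * f x)" by (simp add: fun_eq_iff)
  have d: "\<forall>k. \<forall>x\<in>I. ((deriv ^^ k) (?P 0)) differentiable (at x)"
    using sfam_differentiable[OF assms(1) sP] by blast
  then have d': "\<forall>k. \<forall>x\<in>I. ((deriv ^^ k) (\<lambda>x. A 0 x * f x)) differentiable (at x)"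
    by (simp only: P0)
  have K1: "compact (closure {x\<in>I. f x \<noteq> 0})" and K2: "closure {x\<in>I. f x \<noteq> 0} \<subseteq> I"
    using assms(3) unfolding test_fun_def by simp_all
  have "{x\<in>I. A 0 x * f x \<noteq> 0} \<subseteq> {x\<in>I. f x \<noteq> 0}" by auto
  also have "\<dots> \<subseteq> closure {x\<in>I. f x \<noteq> 0}" by (rule closure_subset)
  finally have "compact (closure {x\<in>I. A 0 x * f x \<noteq> 0}) \<and> closure {x\<in>I. A 0 x * f x \<noteq> 0} \<subseteq> I"
    by (rule supp_sub[OF K1 K2])
  with d' show ?thesis unfolding test_fun_def by simp
qed

lemma deriv_mult_point:
  assumes "sfam UNIV A" "test_fun I f" "x \<in> I"
  shows "deriv (\<lambda>x. A 0 x * f x) x = A 1 x * f x + A 0 x * deriv f x"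
proof -
  have a: "(A 0 has_real_derivative A 1 x) (at x)" using assms(1) unfolding sfam_def by auto
  have b0: "((deriv ^^ 0) f has_real_derivative (deriv ^^ Suc 0) f x) (at x)"
    using test_fun_sfam[OF assms(2)] assms(3) unfolding sfam_def by blast
  then have b: "(f has_real_derivative deriv f x) (at x)" by simp
  have "((\<lambda>x. A 0 x * f x) has_real_derivative A 1 x * f x + A 0 x * deriv f x) (at x)"
    using DERIV_mult[OF a b] by (simp add: algebra_simps)
  then show ?thesis by (rule DERIV_imp_deriv)
qed

lemma test_fun_cont:
  assumes "test_fun I f"
  shows "continuous_on I f"
proof -
  have "\<forall>x\<in>I. (deriv ^^ 0) f differentiable (at x)" using assms unfolding test_fun_def by blast
  then have "\<forall>x\<in>I. f differentiable (at x)" by simp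
  then show ?thesis
    by (meson continuous_at_imp_continuous_on differentiable_imp_continuous_within)
qed

lemma test_bm:
  assumes "test_fun (Iv T) f"
  shows "bm (Iv T) f"
proof -
  let ?K = "closure {x\<in>Iv T. f x \<noteq> 0}"
  have K: "compact ?K" "?K \<subseteq> Iv T" using assms unfolding test_fun_def by auto
  have c: "continuous_on (Iv T) f" by (rule test_fun_cont[OF assms])
  obtain B where B: "\<And>x. x \<in> ?K \<Longrightarrow> norm (f x) \<le> B" "B \<ge> 0"
    using continuous_on_compact_bound[OF K(1) continuous_on_subset[OF c K(2)]] by metis
  have "\<bar>f x\<bar> \<le> B" if "x \<in> Iv T" for x
  proof (cases "x \<in> ?K")
    case True then show ?thesis using B(1)[OF True] by simp
  next
    case False then show ?thesis using test_fun_zero_outside[OF assms that] B(2) by simp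
  qed
  moreover have "f \<in> borel_measurable (lebesgue_on (Iv T))"
    by (rule continuous_imp_measurable_on_sets_lebesgue[OF c]) simp
  ultimately show ?thesis unfolding bm_def by blast
qed

lemma sfam_bm:
  assumes "sfam UNIV A"
  shows "bm (Iv T) (A k)"
proof -
  have c: "continuous_on UNIV (A k)" by (rule sfam_cont[OF assms])
  obtain B where B: "\<And>x. x \<in> {0..T} \<Longrightarrow> norm (A k x) \<le> B"
    using continuous_on_compact_bound[OF compact_Icc continuous_on_subset[OF c]] by blast
  then have "\<forall>x\<in>Iv T. \<bar>A k x\<bar> \<le> B" by auto
  moreover have "A k \<in> borel_measurable (lebesgue_on (Iv T))"
    by (rule continuous_imp_measurable_on_sets_lebesgue[OF continuous_on_subset[OF c]]) auto
  ultimately show ?thesis unfolding bm_def by blast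
qed

lemma test_L2:
  assumes "T > 0" "test_fun (Iv T) f"
  shows "L2_on (Iv T) f"
  by (rule bm_L2_self[OF assms(1) test_bm[OF assms(2)]])

abbreviation "NN T \<equiv> lebesgue_on (Iv T)"

lemma weak_iff:
  "weak_deriv_of (Iv T) k f g \<longleftrightarrow>
     (\<forall>\<psi>. test_fun (Iv T) \<psi> \<longrightarrow>
        integrable (NN T) (\<lambda>x. f x * (deriv ^^ k) \<psi> x) \<and>
        integrable (NN T) (\<lambda>x. g x * \<psi> x) \<and>
        integral\<^sup>L (NN T) (\<lambda>x. f x * (deriv ^^ k) \<psi> x) = (-1)^k * integral\<^sup>L (NN T) (\<lambda>x. g x * \<psi> x))"
  unfolding weak_deriv_of_def set_integrable_on set_integral_on ..

lemma weak0:
  assumes "T > 0" "L2_on (Iv T) f"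
  shows "weak_deriv_of (Iv T) 0 f f"
  unfolding weak_iff
proof (intro allI impI)
  fix \<psi> assume "test_fun (Iv T) \<psi>"
  then have "integrable (NN T) (\<lambda>x. f x * \<psi> x)"
    using L2_mult_integrable[OF assms(2) test_L2[OF assms(1)]] by blast
  then show "integrable (NN T) (\<lambda>x. f x * (deriv ^^ 0) \<psi> x) \<and> integrable (NN T) (\<lambda>x. f x * \<psi> x) \<and>
        integral\<^sup>L (NN T) (\<lambda>x. f x * (deriv ^^ 0) \<psi> x) = (-1)^0 * integral\<^sup>L (NN T) (\<lambda>x. f x * \<psi> x)"
    by simp
qed

lemma weak_step:
  assumes "weak_deriv_of (Iv T) k f g" "weak_deriv_of (Iv T) (Suc k) f g'"
  shows "weak_deriv_of (Iv T) 1 g g'"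
  unfolding weak_iff
proof (intro allI impI)
  fix \<psi> assume t: "test_fun (Iv T) \<psi>"
  have t': "test_fun (Iv T) (deriv \<psi>)" by (rule test_fun_deriv[OF _ t]) simp
  have A: "integrable (NN T) (\<lambda>x. g x * deriv \<psi> x)"
     "integral\<^sup>L (NN T) (\<lambda>x. f x * (deriv ^^ k) (deriv \<psi>) x) = (-1)^k * integral\<^sup>L (NN T) (\<lambda>x. g x * deriv \<psi> x)"
    using assms(1) t' unfolding weak_iff by blast+
  have B: "integrable (NN T) (\<lambda>x. g' x * \<psi> x)"
     "integral\<^sup>L (NN T) (\<lambda>x. f x * (deriv ^^ Suc k) \<psi> x) = (-1)^Suc k * integral\<^sup>L (NN T) (\<lambda>x. g' x * \<psi> x)"
    using assms(2) t unfolding weak_iff by blast+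
  have "(-1)^k * integral\<^sup>L (NN T) (\<lambda>x. g x * deriv \<psi> x) = (-1)^k * (- integral\<^sup>L (NN T) (\<lambda>x. g' x * \<psi> x))"
    using A(2) B(2) unfolding funpow_deriv_Suc by simp
  then have "(-1)^k * integral\<^sup>L (NN T) (\<lambda>x. g x * deriv \<psi> x) = (-1)^k * (- integral\<^sup>L (NN T) (\<lambda>x. g' x * \<psi> x))"
    by simp
  moreover have "(-1::real)^k \<noteq> 0" by simp
  ultimately have "integral\<^sup>L (NN T) (\<lambda>x. g x * deriv \<psi> x) = - integral\<^sup>L (NN T) (\<lambda>x. g' x * \<psi> x)"
    using mult_left_cancel by blast
  then show "integrable (NN T) (\<lambda>x. g x * (deriv ^^ 1) \<psi> x) \<and> integrable (NN T) (\<lambda>x. g' x * \<psi> x) \<and>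
        integral\<^sup>L (NN T) (\<lambda>x. g x * (deriv ^^ 1) \<psi> x) = (-1)^1 * integral\<^sup>L (NN T) (\<lambda>x. g' x * \<psi> x)"
    using A(1) B(1) by simp
qed

lemma weak_chain:
  assumes "T > 0" "L2_on (Iv T) (h 0)" "\<forall>l<k. weak_deriv_of (Iv T) 1 (h l) (h (Suc l))"
  shows "weak_deriv_of (Iv T) k (h 0) (h k)"
  using assms(3)
proof (induction k)
  case 0 then show ?case using weak0[OF assms(1,2)] by simp
next
  case (Suc k)
  have IH: "weak_deriv_of (Iv T) k (h 0) (h k)" using Suc by simp
  have W: "weak_deriv_of (Iv T) 1 (h k) (h (Suc k))" using Suc.prems by simp
  show ?case
    unfolding weak_iff
  proof (intro allI impI)
    fix \<psi> assume t: "test_fun (Iv T) \<psi>"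
    have t': "test_fun (Iv T) (deriv \<psi>)" by (rule test_fun_deriv[OF _ t]) simp
    have A: "integrable (NN T) (\<lambda>x. h 0 x * (deriv ^^ k) (deriv \<psi>) x)"
       "integral\<^sup>L (NN T) (\<lambda>x. h 0 x * (deriv ^^ k) (deriv \<psi>) x) = (-1)^k * integral\<^sup>L (NN T) (\<lambda>x. h k x * deriv \<psi> x)"
      using IH t' unfolding weak_iff by blast+
    have B: "integrable (NN T) (\<lambda>x. h (Suc k) x * \<psi> x)"
       "integral\<^sup>L (NN T) (\<lambda>x. h k x * (deriv ^^ 1) \<psi> x) = (-1)^1 * integral\<^sup>L (NN T) (\<lambda>x. h (Suc k) x * \<psi> x)"
      using W t unfolding weak_iff by blast+
    show "integrable (NN T) (\<lambda>x. h 0 x * (deriv ^^ Suc k) \<psi> x) \<and> integrable (NN T) (\<lambda>x. h (Suc k) x * \<psi> x) \<and>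
        integral\<^sup>L (NN T) (\<lambda>x. h 0 x * (deriv ^^ Suc k) \<psi> x) = (-1)^Suc k * integral\<^sup>L (NN T) (\<lambda>x. h (Suc k) x * \<psi> x)"
      using A B unfolding funpow_deriv_Suc by simp
  qed
qed

lemma weak_prod1:
  assumes "T > 0" "sfam UNIV A" "weak_deriv_of (Iv T) 1 h h'" "L2_on (Iv T) h" "L2_on (Iv T) h'"
  shows "weak_deriv_of (Iv T) 1 (\<lambda>x. A 0 x * h x) (\<lambda>x. A 1 x * h x + A 0 x * h' x)"
  unfolding weak_iff
proof (intro allI impI)
  fix \<psi> assume t: "test_fun (Iv T) \<psi>"
  have t': "test_fun (Iv T) (deriv \<psi>)" by (rule test_fun_deriv[OF _ t]) simp
  have tA: "test_fun (Iv T) (\<lambda>x. A 0 x * \<psi> x)" by (rule test_fun_mult[OF _ assms(2) t]) simp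
  have L0: "L2_on (Iv T) (\<lambda>x. A 0 x * h x)" "L2_on (Iv T) (\<lambda>x. A 1 x * h x)" "L2_on (Iv T) (\<lambda>x. A 0 x * h' x)"
    using bm_L2[OF sfam_bm[OF assms(2)]] assms(4,5) by blast+
  have Lpsi: "L2_on (Iv T) \<psi>" "L2_on (Iv T) (deriv \<psi>)"
    using test_L2[OF assms(1)] t t' by blast+
  have i1: "integrable (NN T) (\<lambda>x. A 0 x * h x * deriv \<psi> x)"
    by (rule L2_mult_integrable[OF L0(1) Lpsi(2)])
  have i2: "integrable (NN T) (\<lambda>x. A 1 x * h x * \<psi> x)"
    by (rule L2_mult_integrable[OF L0(2) Lpsi(1)])
  have i3: "integrable (NN T) (\<lambda>x. A 0 x * h' x * \<psi> x)"
    by (rule L2_mult_integrable[OF L0(3) Lpsi(1)])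
  have W: "integral\<^sup>L (NN T) (\<lambda>x. h x * (deriv ^^ 1) (\<lambda>x. A 0 x * \<psi> x) x) = (-1)^1 * integral\<^sup>L (NN T) (\<lambda>x. h' x * (A 0 x * \<psi> x))"
    using assms(3) tA unfolding weak_iff by blast
  have "integral\<^sup>L (NN T) (\<lambda>x. h x * (deriv ^^ 1) (\<lambda>x. A 0 x * \<psi> x) x)
      = integral\<^sup>L (NN T) (\<lambda>x. A 1 x * h x * \<psi> x + A 0 x * h x * deriv \<psi> x)"
  proof (rule Bochner_Integration.integral_cong[OF refl])
    fix x assume "x \<in> space (NN T)"
    then have "x \<in> Iv T" by simp
    then show "h x * (deriv ^^ 1) (\<lambda>x. A 0 x * \<psi> x) x = A 1 x * h x * \<psi> x + A 0 x * h x * deriv \<psi> x"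
      using deriv_mult_point[OF assms(2) t] by (simp add: algebra_simps)
  qed
  also have "\<dots> = integral\<^sup>L (NN T) (\<lambda>x. A 1 x * h x * \<psi> x) + integral\<^sup>L (NN T) (\<lambda>x. A 0 x * h x * deriv \<psi> x)"
    by (rule Bochner_Integration.integral_add[OF i2 i1])
  finally have E1: "integral\<^sup>L (NN T) (\<lambda>x. A 1 x * h x * \<psi> x) + integral\<^sup>L (NN T) (\<lambda>x. A 0 x * h x * deriv \<psi> x)
      = - integral\<^sup>L (NN T) (\<lambda>x. A 0 x * h' x * \<psi> x)"
    using W by (simp add: algebra_simps)
  have E2: "integral\<^sup>L (NN T) (\<lambda>x. (A 1 x * h x + A 0 x * h' x) * \<psi> x)
     = integral\<^sup>L (NN T) (\<lambda>x. A 1 x * h x * \<psi> x) + integral\<^sup>L (NN T) (\<lambda>x. A 0 x * h' x * \<psi> x)"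
    unfolding distrib_right by (rule Bochner_Integration.integral_add[OF i2 i3])
  have i4: "integrable (NN T) (\<lambda>x. (A 1 x * h x + A 0 x * h' x) * \<psi> x)"
    unfolding distrib_right by (rule Bochner_Integration.integrable_add[OF i2 i3])
  show "integrable (NN T) (\<lambda>x. A 0 x * h x * (deriv ^^ 1) \<psi> x) \<and>
        integrable (NN T) (\<lambda>x. (A 1 x * h x + A 0 x * h' x) * \<psi> x) \<and>
        integral\<^sup>L (NN T) (\<lambda>x. A 0 x * h x * (deriv ^^ 1) \<psi> x) = (-1)^1 * integral\<^sup>L (NN T) (\<lambda>x. (A 1 x * h x + A 0 x * h' x) * \<psi> x)"
    using i1 i4 E1 E2 by simp
qed

lemma L2_add:
  assumes "L2_on (Iv T) f" "L2_on (Iv T) g"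
  shows "L2_on (Iv T) (\<lambda>x. f x + g x)"
proof -
  have m: "f \<in> borel_measurable (NN T)" "g \<in> borel_measurable (NN T)"
    and i: "integrable (NN T) (\<lambda>x. (f x)^2)" "integrable (NN T) (\<lambda>x. (g x)^2)"
    using assms by (auto simp: L2_on_iff)
  have "integrable (NN T) (\<lambda>x. (f x + g x)^2)"
  proof (rule Bochner_Integration.integrable_bound[of _ "\<lambda>x. 2 * (f x)^2 + 2 * (g x)^2"])
    show "integrable (NN T) (\<lambda>x. 2 * (f x)^2 + 2 * (g x)^2)" using i by auto
    show "(\<lambda>x. (f x + g x)^2) \<in> borel_measurable (NN T)" using m by auto
    show "AE x in NN T. norm ((f x + g x)^2) \<le> norm (2 * (f x)^2 + 2 * (g x)^2)"
    proof (rule AE_I2)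
      fix x
      have "0 \<le> (f x - g x)^2" by simp
      then have "(f x + g x)^2 \<le> 2 * (f x)^2 + 2 * (g x)^2" by (simp add: power2_eq_square algebra_simps)
      then show "norm ((f x + g x)^2) \<le> norm (2 * (f x)^2 + 2 * (g x)^2)" by simp
    qed
  qed
  then show ?thesis using m by (simp add: L2_on_iff)
qed

lemma L2_cmult:
  assumes "L2_on (Iv T) f"
  shows "L2_on (Iv T) (\<lambda>x. c * f x)"
proof -
  have m: "f \<in> borel_measurable (NN T)" and i: "integrable (NN T) (\<lambda>x. (f x)^2)"
    using assms by (auto simp: L2_on_iff)
  have "(\<lambda>x. c * f x) \<in> borel_measurable (NN T)" using m by measurable
  moreover have "integrable (NN T) (\<lambda>x. (c * f x)^2)" using i by (simp add: power_mult_distrib)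
  ultimately show ?thesis by (simp add: L2_on_iff)
qed

lemma L2_zero: "L2_on (Iv T) (\<lambda>_. 0)"
  by (simp add: L2_on_iff)

lemma L2_sum:
  assumes "finite S" "\<forall>i\<in>S. L2_on (Iv T) (f i)"
  shows "L2_on (Iv T) (\<lambda>x. \<Sum>i\<in>S. f i x)"
  using assms
proof (induction S rule: finite_induct)
  case empty then show ?case using L2_zero by simp
next
  case (insert a S)
  then show ?case using L2_add[of T "f a" "\<lambda>x. \<Sum>i\<in>S. f i x"] by simp
qed

lemma weak_zero: "weak_deriv_of (Iv T) k (\<lambda>_. 0) (\<lambda>_. 0)"
  unfolding weak_iff by simp

lemma weak_add:
  assumes "weak_deriv_of (Iv T) k f g" "weak_deriv_of (Iv T) k f2 g2"
  shows "weak_deriv_of (Iv T) k (\<lambda>x. f x + f2 x) (\<lambda>x. g x + g2 x)"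
  unfolding weak_iff
proof (intro allI impI)
  fix \<psi> assume t: "test_fun (Iv T) \<psi>"
  have A: "integrable (NN T) (\<lambda>x. f x * (deriv ^^ k) \<psi> x)" "integrable (NN T) (\<lambda>x. g x * \<psi> x)"
    "integral\<^sup>L (NN T) (\<lambda>x. f x * (deriv ^^ k) \<psi> x) = (-1)^k * integral\<^sup>L (NN T) (\<lambda>x. g x * \<psi> x)"
    using assms(1) t unfolding weak_iff by blast+
  have B: "integrable (NN T) (\<lambda>x. f2 x * (deriv ^^ k) \<psi> x)" "integrable (NN T) (\<lambda>x. g2 x * \<psi> x)"
    "integral\<^sup>L (NN T) (\<lambda>x. f2 x * (deriv ^^ k) \<psi> x) = (-1)^k * integral\<^sup>L (NN T) (\<lambda>x. g2 x * \<psi> x)"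
    using assms(2) t unfolding weak_iff by blast+
  show "integrable (NN T) (\<lambda>x. (f x + f2 x) * (deriv ^^ k) \<psi> x) \<and>
        integrable (NN T) (\<lambda>x. (g x + g2 x) * \<psi> x) \<and>
        integral\<^sup>L (NN T) (\<lambda>x. (f x + f2 x) * (deriv ^^ k) \<psi> x) = (-1)^k * integral\<^sup>L (NN T) (\<lambda>x. (g x + g2 x) * \<psi> x)"
    unfolding distrib_right
    using A B by (simp add: Bochner_Integration.integral_add algebra_simps)
qed

lemma weak_cmult:
  assumes "weak_deriv_of (Iv T) k f g"
  shows "weak_deriv_of (Iv T) k (\<lambda>x. c * f x) (\<lambda>x. c * g x)"
  unfolding weak_iff
proof (intro allI impI)
  fix \<psi> assume t: "test_fun (Iv T) \<psi>"
  have A: "integrable (NN T) (\<lambda>x. f x * (deriv ^^ k) \<psi> x)" "integrable (NN T) (\<lambda>x. g x * \<psi> x)"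
    "integral\<^sup>L (NN T) (\<lambda>x. f x * (deriv ^^ k) \<psi> x) = (-1)^k * integral\<^sup>L (NN T) (\<lambda>x. g x * \<psi> x)"
    using assms(1) t unfolding weak_iff by blast+
  show "integrable (NN T) (\<lambda>x. c * f x * (deriv ^^ k) \<psi> x) \<and>
        integrable (NN T) (\<lambda>x. c * g x * \<psi> x) \<and>
        integral\<^sup>L (NN T) (\<lambda>x. c * f x * (deriv ^^ k) \<psi> x) = (-1)^k * integral\<^sup>L (NN T) (\<lambda>x. c * g x * \<psi> x)"
    unfolding mult.assoc using A by simp
qed

lemma weak_sum:
  assumes "finite S" "\<forall>i\<in>S. weak_deriv_of (Iv T) k (f i) (g i)"
  shows "weak_deriv_of (Iv T) k (\<lambda>x. \<Sum>i\<in>S. f i x) (\<lambda>x. \<Sum>i\<in>S. g i x)"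
  using assms
proof (induction S rule: finite_induct)
  case empty then show ?case using weak_zero by simp
next
  case (insert a S)
  then show ?case using weak_add[of T k "f a" "g a" "\<lambda>x. \<Sum>i\<in>S. f i x" "\<lambda>x. \<Sum>i\<in>S. g i x"] by simp
qed

lemma sfam_shift: "sfam U A \<Longrightarrow> sfam U (\<lambda>k. A (k + j))"
  unfolding sfam_def by simp

definition Hf :: "(nat \<Rightarrow> real \<Rightarrow> real) \<Rightarrow> (nat \<Rightarrow> real \<Rightarrow> real) \<Rightarrow> nat \<Rightarrow> real \<Rightarrow> real" where
  "Hf A g l x = (\<Sum>i\<le>l. real (l choose i) * (A (l - i) x * g i x))"

lemma Hf_0: "Hf A g 0 = (\<lambda>x. A 0 x * g 0 x)"
  by (simp add: Hf_def fun_eq_iff)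

lemma Hf_L2:
  assumes "sfam UNIV A" "\<forall>l\<le>m. L2_on (Iv T) (g l)" "l \<le> m"
  shows "L2_on (Iv T) (Hf A g l)"
proof -
  have "L2_on (Iv T) (\<lambda>x. \<Sum>i\<le>l. real (l choose i) * (A (l - i) x * g i x))"
    using assms by (intro L2_sum L2_cmult bm_L2 sfam_bm ballI) auto
  then show ?thesis by (simp add: Hf_def[abs_def])
qed

lemma Hf_weak:
  assumes "T > 0" "sfam UNIV A" "\<forall>l\<le>m. L2_on (Iv T) (g l)"
    "\<forall>l<m. weak_deriv_of (Iv T) 1 (g l) (g (Suc l))" "l < m"
  shows "weak_deriv_of (Iv T) 1 (Hf A g l) (Hf A g (Suc l))"
proof -
  have tm: "weak_deriv_of (Iv T) 1 (\<lambda>x. A (l - i) x * g i x)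
      (\<lambda>x. A (Suc (l - i)) x * g i x + A (l - i) x * g (Suc i) x)" if i: "i \<le> l" for i
  proof -
    have "weak_deriv_of (Iv T) 1 (\<lambda>x. A (0 + (l - i)) x * g i x)
      (\<lambda>x. A (1 + (l - i)) x * g i x + A (0 + (l - i)) x * g (Suc i) x)"
      by (rule weak_prod1[OF assms(1) sfam_shift[OF assms(2)]]) (use assms i in auto)
    then show ?thesis by simp
  qed
  have "weak_deriv_of (Iv T) 1 (\<lambda>x. \<Sum>i\<le>l. real (l choose i) * (A (l - i) x * g i x))
      (\<lambda>x. \<Sum>i\<le>l. real (l choose i) * (A (Suc (l - i)) x * g i x + A (l - i) x * g (Suc i) x))"
    by (intro weak_sum weak_cmult ballI tm) auto
  moreover have "(\<lambda>x. \<Sum>i\<le>l. real (l choose i) * (A (Suc (l - i)) x * g i x + A (l - i) x * g (Suc i) x))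
      = Hf A g (Suc l)"
  proof
    fix x
    show "(\<Sum>i\<le>l. real (l choose i) * (A (Suc (l - i)) x * g i x + A (l - i) x * g (Suc i) x)) = Hf A g (Suc l) x"
      using leibniz_step[of l "\<lambda>i. g i x" "\<lambda>i. A i x"] unfolding Hf_def
      by (simp add: algebra_simps)
  qed
  ultimately show ?thesis by (simp add: Hf_def[abs_def])
qed

definition gfun :: "real \<Rightarrow> (real \<Rightarrow> real) \<Rightarrow> nat \<Rightarrow> real \<Rightarrow> real" where
  "gfun T \<phi> l = (if l = 0 then \<phi> else weak_deriv (Iv T) l \<phi>)"

lemma gfun_props:
  assumes "T > 0" "in_Hm (Iv T) m \<phi>" "l \<le> m"
  shows "L2_on (Iv T) (gfun T \<phi> l) \<and> weak_deriv_of (Iv T) l \<phi> (gfun T \<phi> l)"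
proof (cases "l = 0")
  case True
  have "L2_on (Iv T) \<phi>" using assms(2) unfolding in_Hm_def by blast
  then show ?thesis using True weak0[OF assms(1)] by (simp add: gfun_def)
next
  case False
  have "\<exists>g. L2_on (Iv T) g \<and> weak_deriv_of (Iv T) l \<phi> g" using assms(2,3) unfolding in_Hm_def by blast
  then have "L2_on (Iv T) (weak_deriv (Iv T) l \<phi>) \<and> weak_deriv_of (Iv T) l \<phi> (weak_deriv (Iv T) l \<phi>)"
    unfolding weak_deriv_def by (rule someI_ex)
  then show ?thesis using False by (simp add: gfun_def)
qed

lemma prod_weak:
  assumes "T > 0" "sfam UNIV A" "in_Hm (Iv T) m \<phi>" "k \<le> m"
  shows "L2_on (Iv T) (Hf A (gfun T \<phi>) k) \<and> weak_deriv_of (Iv T) k (\<lambda>x. A 0 x * \<phi> x) (Hf A (gfun T \<phi>) k)"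
proof -
  let ?g = "gfun T \<phi>"
  have L: "\<forall>l\<le>m. L2_on (Iv T) (?g l)" using gfun_props[OF assms(1,3)] by blast
  have W: "\<forall>l<m. weak_deriv_of (Iv T) 1 (?g l) (?g (Suc l))"
  proof (intro allI impI)
    fix l assume "l < m"
    then show "weak_deriv_of (Iv T) 1 (?g l) (?g (Suc l))"
      using weak_step gfun_props[OF assms(1,3)] by (meson Suc_leI less_imp_le_nat)
  qed
  have HL: "L2_on (Iv T) (Hf A ?g k)" by (rule Hf_L2[OF assms(2) L assms(4)])
  have H0: "L2_on (Iv T) (Hf A ?g 0)" by (rule Hf_L2[OF assms(2) L]) simp
  have "\<forall>l<k. weak_deriv_of (Iv T) 1 (Hf A ?g l) (Hf A ?g (Suc l))"
    using Hf_weak[OF assms(1,2) L W] assms(4) by auto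
  then have "weak_deriv_of (Iv T) k (Hf A ?g 0) (Hf A ?g k)"
    by (rule weak_chain[of T "Hf A ?g", OF assms(1) H0])
  moreover have "Hf A ?g 0 = (\<lambda>x. A 0 x * \<phi> x)" by (simp add: Hf_0 gfun_def)
  ultimately show ?thesis using HL by simp
qed

lemma prod_in_Hm:
  assumes "T > 0" "sfam UNIV A" "in_Hm (Iv T) m \<phi>"
  shows "in_Hm (Iv T) m (\<lambda>x. A 0 x * \<phi> x)"
proof -
  have "L2_on (Iv T) (\<lambda>x. A 0 x * \<phi> x)"
    using bm_L2[OF sfam_bm[OF assms(2)]] assms(3) unfolding in_Hm_def by blast
  moreover have "\<forall>k\<le>m. \<exists>g. L2_on (Iv T) g \<and> weak_deriv_of (Iv T) k (\<lambda>x. A 0 x * \<phi> x) g"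
    using prod_weak[OF assms] by blast
  ultimately show ?thesis unfolding in_Hm_def by blast
qed

lemma test_fun_of_sfam:
  assumes "sfam UNIV D" "\<And>x. D 0 x \<noteq> 0 \<Longrightarrow> c \<le> x \<and> x \<le> d" "0 < c" "d < T"
  shows "test_fun (Iv T) (D 0)"
proof -
  have diff: "\<forall>k. \<forall>x\<in>Iv T. ((deriv ^^ k) (D 0)) differentiable (at x)"
    using sfam_differentiable[OF open_UNIV assms(1)] by blast
  have sub: "{x\<in>Iv T. D 0 x \<noteq> 0} \<subseteq> {c..d}" using assms(2) by auto
  have cl: "closure {x\<in>Iv T. D 0 x \<noteq> 0} \<subseteq> {c..d}"
    by (rule closure_minimal[OF sub]) simp
  have "compact ({c..d} \<inter> closure {x\<in>Iv T. D 0 x \<noteq> 0})"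
    using compact_Int_closed[OF compact_Icc closed_closure] .
  then have "compact (closure {x\<in>Iv T. D 0 x \<noteq> 0})" using cl by (simp add: Int_absorb1)
  moreover have "closure {x\<in>Iv T. D 0 x \<noteq> 0} \<subseteq> Iv T"
    using cl assms(3,4) by auto
  ultimately show ?thesis using diff unfolding test_fun_def by blast
qed

definition psi :: "real \<Rightarrow> real \<Rightarrow> nat \<Rightarrow> nat \<Rightarrow> real \<Rightarrow> real" where
  "psi a b n = pfam (afam 1 (real (Suc n)) (- real (Suc n) * a - 1) Sfam) (afam 1 (- real (Suc n)) (real (Suc n) * b - 1) Sfam)"

lemma psi0: "psi a b n 0 x = Sfun (real (Suc n) * (x - a) - 1) * Sfun (real (Suc n) * (b - x) - 1)"
  by (simp add: psi_def afam_def Sfam_def algebra_simps)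

lemma sfam_psi: "sfam UNIV (psi a b n)"
  unfolding psi_def by (intro sfam_mult sfam_affine sfam_Sfam)

lemma psi_test:
  assumes "0 \<le> a" "b \<le> T"
  shows "test_fun (Iv T) (psi a b n 0)"
proof (rule test_fun_of_sfam[OF sfam_psi])
  let ?s = "real (Suc n)"
  show "a + 1 / ?s \<le> x \<and> x \<le> b - 1 / ?s" if "psi a b n 0 x \<noteq> 0" for x
  proof -
    have "Sfun (?s * (x - a) - 1) \<noteq> 0" "Sfun (?s * (b - x) - 1) \<noteq> 0" using that by (auto simp: psi0)
    then have "?s * (x - a) - 1 > 0" "?s * (b - x) - 1 > 0" using Sfun_le0 by (metis not_le)+
    then show ?thesis by (simp add: field_simps)
  qed
  show "0 < a + 1 / ?s" using assms by (simp add: add_nonneg_pos)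
  have "0 < 1 / ?s" by simp
  then show "b - 1 / ?s < T" using assms by linarith
qed

lemma psi_bound: "\<bar>psi a b n 0 x\<bar> \<le> 1"
proof -
  have "0 \<le> Sfun (real (Suc n) * (x - a) - 1)" "Sfun (real (Suc n) * (x - a) - 1) \<le> 1"
       "0 \<le> Sfun (real (Suc n) * (b - x) - 1)" "Sfun (real (Suc n) * (b - x) - 1) \<le> 1"
    using Sfun_range by auto
  then show ?thesis unfolding psi0 by (simp add: abs_mult mult_le_one)
qed

lemma psi_lim: "(\<lambda>n. psi a b n 0 x) \<longlonglongrightarrow> indicator {a<..<b} x"
proof (cases "a < x \<and> x < b")
  case True
  obtain N :: nat where N: "real N > 2 / (x - a) + 2 / (b - x)" using reals_Archimedean2 by blast
  have "eventually (\<lambda>n. psi a b n 0 x = 1) sequentially"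
    unfolding eventually_sequentially
  proof (intro exI allI impI)
    fix n assume "N \<le> n"
    then have n: "real (Suc n) > 2 / (x - a) + 2 / (b - x)" using N by linarith
    have p1: "2 / (x - a) > 0" "2 / (b - x) > 0" using True by auto
    have "real (Suc n) > 2 / (x - a)" using n p1 by linarith
    then have "real (Suc n) * (x - a) > 2" using True by (simp add: field_simps)
    then have "Sfun (real (Suc n) * (x - a) - 1) = 1" by (intro Sfun_ge1) simp
    moreover have "real (Suc n) > 2 / (b - x)" using n p1 by linarith
    then have "real (Suc n) * (b - x) > 2" using True by (simp add: field_simps)
    then have "Sfun (real (Suc n) * (b - x) - 1) = 1" by (intro Sfun_ge1) simp
    ultimately show "psi a b n 0 x = 1" by (simp add: psi0)
  qed
  then have "(\<lambda>n. psi a b n 0 x) \<longlonglongrightarrow> 1" by (rule tendsto_eventually)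
  then show ?thesis using True by simp
next
  case False
  have "psi a b n 0 x = 0" for n
  proof (cases "x \<le> a")
    case True
    have "real (Suc n) * (x - a) \<le> 0" using True by (simp add: mult_nonneg_nonpos)
    then have "Sfun (real (Suc n) * (x - a) - 1) = 0" by (intro Sfun_le0) simp
    then show ?thesis by (simp add: psi0)
  next
    case F: False
    then have "b \<le> x" using False by simp
    then have "real (Suc n) * (b - x) \<le> 0" by (simp add: mult_nonneg_nonpos)
    then have "Sfun (real (Suc n) * (b - x) - 1) = 0" by (intro Sfun_le0) simp
    then show ?thesis by (simp add: psi0)
  qed
  then show ?thesis using False by simp
qed

lemma fund_interval:
  assumes "T > 0" "integrable (NN T) h"
    "\<forall>\<psi>. test_fun (Iv T) \<psi> \<longrightarrow> integral\<^sup>L (NN T) (\<lambda>x. h x * \<psi> x) = 0"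
    "0 \<le> a" "b \<le> T"
  shows "integral\<^sup>L (NN T) (\<lambda>x. h x * indicator {a<..<b} x) = 0"
proof -
  have hm: "h \<in> borel_measurable (NN T)" using assms(2) by (rule borel_measurable_integrable)
  have "(\<lambda>n. integral\<^sup>L (NN T) (\<lambda>x. h x * psi a b n 0 x)) \<longlonglongrightarrow> integral\<^sup>L (NN T) (\<lambda>x. h x * indicator {a<..<b} x)"
  proof (rule integral_dominated_convergence[where w="\<lambda>x. \<bar>h x\<bar>"])
    have "(indicator {a<..<b} :: real \<Rightarrow> real) \<in> borel_measurable (NN T)"
      by (intro measurable_restrict_space1 borel_measurable_indicator) simp
    then show "(\<lambda>x. h x * indicator {a<..<b} x) \<in> borel_measurable (NN T)" using hm by measurable
    show "(\<lambda>x. h x * psi a b n 0 x) \<in> borel_measurable (NN T)" for n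
    proof -
      have "psi a b n 0 \<in> borel_measurable (NN T)"
        by (rule continuous_imp_measurable_on_sets_lebesgue[OF sfam_cont[OF sfam_psi]]) simp
      then show ?thesis using hm by measurable
    qed
    show "integrable (NN T) (\<lambda>x. \<bar>h x\<bar>)" using assms(2) by (rule integrable_abs)
    show "AE x in NN T. (\<lambda>n. h x * psi a b n 0 x) \<longlonglongrightarrow> h x * indicator {a<..<b} x"
      by (intro AE_I2 tendsto_mult_left psi_lim)
    show "AE x in NN T. norm (h x * psi a b n 0 x) \<le> \<bar>h x\<bar>" for n
    proof (rule AE_I2)
      fix x
      have "\<bar>h x\<bar> * \<bar>psi a b n 0 x\<bar> \<le> \<bar>h x\<bar> * 1" by (intro mult_left_mono psi_bound) simp
      then show "norm (h x * psi a b n 0 x) \<le> \<bar>h x\<bar>" by (simp add: abs_mult)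
    qed
  qed
  moreover have "(\<lambda>n. integral\<^sup>L (NN T) (\<lambda>x. h x * psi a b n 0 x)) = (\<lambda>n. 0)"
  proof
    fix n
    have "test_fun (Iv T) (psi a b n 0)" by (rule psi_test[OF assms(4,5)])
    then show "integral\<^sup>L (NN T) (\<lambda>x. h x * psi a b n 0 x) = 0" using assms(3) by blast
  qed
  ultimately have "(\<lambda>n. 0) \<longlonglongrightarrow> integral\<^sup>L (NN T) (\<lambda>x. h x * indicator {a<..<b} x)" by simp
  then show ?thesis using LIMSEQ_unique[OF _ tendsto_const] by metis
qed

lemma fund_ray:
  assumes "T > 0" "integrable (NN T) h"
    "\<forall>\<psi>. test_fun (Iv T) \<psi> \<longrightarrow> integral\<^sup>L (NN T) (\<lambda>x. h x * \<psi> x) = 0"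
  shows "integral\<^sup>L (NN T) (\<lambda>x. h x * indicator {c<..} x) = 0"
proof (cases "c < 0")
  case True
  have "integral\<^sup>L (NN T) (\<lambda>x. h x * indicator {c<..} x) = integral\<^sup>L (NN T) (\<lambda>x. h x * indicator {0<..<T} x)"
    by (rule Bochner_Integration.integral_cong[OF refl]) (use True in \<open>auto split: split_indicator\<close>)
  then show ?thesis using fund_interval[OF assms, of 0 T] by simp
next
  case False
  show ?thesis
  proof (cases "c < T")
    case True
    have "integral\<^sup>L (NN T) (\<lambda>x. h x * indicator {c<..} x) = integral\<^sup>L (NN T) (\<lambda>x. h x * indicator {c<..<T} x)"
      by (rule Bochner_Integration.integral_cong[OF refl]) (auto split: split_indicator)
    then show ?thesis using fund_interval[OF assms, of c T] False by simp
  next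
    case F2: False
    have "integral\<^sup>L (NN T) (\<lambda>x. h x * indicator {c<..} x) = integral\<^sup>L (NN T) (\<lambda>x. 0)"
      by (rule Bochner_Integration.integral_cong[OF refl]) (use F2 in \<open>auto split: split_indicator\<close>)
    then show ?thesis by simp
  qed
qed

lemma ennreal_eq_neg: "ennreal (y::real) = ennreal (- y) \<Longrightarrow> y = 0"
proof -
  assume e: "ennreal y = ennreal (- y)"
  show "y = 0"
  proof (cases "y \<le> 0")
    case True
    then have z: "ennreal y = 0" by (simp only: ennreal_eq_0_iff)
    have "ennreal (- y) = 0" using e z by simp
    then have "- y \<le> 0" by (simp only: ennreal_eq_0_iff)
    then show ?thesis using True by simp
  next
    case False
    then have z: "ennreal (- y) = 0" by (simp add: ennreal_eq_0_iff)
    have "ennreal y = 0" using e z by simp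
    then have "y \<le> 0" by (simp only: ennreal_eq_0_iff)
    then show ?thesis using False by simp
  qed
qed

lemma fund_AE:
  assumes "T > 0" "integrable (NN T) h"
    "\<forall>\<psi>. test_fun (Iv T) \<psi> \<longrightarrow> integral\<^sup>L (NN T) (\<lambda>x. h x * \<psi> x) = 0"
  shows "AE x in NN T. h x = 0"
proof -
  define H where "H x = indicator (Iv T) x * h x" for x
  have Hi: "integrable lebesgue H"
    using assms(2) integrable_restrict_space[of "Iv T" lebesgue h] by (simp add: H_def[abs_def])
  have HI: "integral\<^sup>L lebesgue (\<lambda>x. H x * indicator {c<..} x) = 0" for c
  proof -
    have "integral\<^sup>L (NN T) (\<lambda>x. h x * indicator {c<..} x) = integral\<^sup>L lebesgue (\<lambda>x. H x * indicator {c<..} x)"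
      using integral_restrict_space[of "Iv T" lebesgue "\<lambda>x. h x * indicator {c<..} x"]
      by (simp add: H_def mult.assoc)
    then show ?thesis using fund_ray[OF assms] by simp
  qed
  have "H \<in> borel_measurable (completion lborel)" using Hi by (rule borel_measurable_integrable)
  then obtain H' where H'm: "H' \<in> borel_measurable lborel" and HH': "AE x in lborel. H x = H' x"
    using completion_ex_borel_measurable_real by blast
  have HH'L: "AE x in lebesgue. H x = H' x" using HH' by (rule AE_completion)
  have H'mL: "H' \<in> borel_measurable lebesgue" using H'm by (rule measurable_completion)
  have H'iL: "integrable lebesgue H'" by (rule integrable_cong_AE_imp[OF Hi H'mL HH'L])
  have H'i: "integrable lborel H'" using H'iL integrable_completion[of H' lborel] H'm by simp
  have H'ic: "integrable lborel (\<lambda>x. H' x * indicator {c<..} x)" for c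
    by (rule integrable_real_mult_indicator[OF _ H'i]) simp
  have H'I: "integral\<^sup>L lborel (\<lambda>x. H' x * indicator {c<..} x) = 0" for c
  proof -
    have "integral\<^sup>L lebesgue (\<lambda>x. H x * indicator {c<..} x) = integral\<^sup>L lebesgue (\<lambda>x. H' x * indicator {c<..} x)"
    proof (rule integral_cong_AE)
      have ic: "(indicator {c<..} :: real \<Rightarrow> real) \<in> borel_measurable lebesgue"
        by (rule borel_measurable_indicator) simp
      have "H \<in> borel_measurable lebesgue" using Hi by (rule borel_measurable_integrable)
      then show "(\<lambda>x. H x * indicator {c<..} x) \<in> borel_measurable lebesgue"
        using ic by (rule borel_measurable_times)
      show "(\<lambda>x. H' x * indicator {c<..} x) \<in> borel_measurable lebesgue"
        using H'mL ic by (rule borel_measurable_times)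
      show "AE x in lebesgue. H x * indicator {c<..} x = H' x * indicator {c<..} x"
        using HH'L by eventually_elim simp
    qed
    also have "\<dots> = integral\<^sup>L lborel (\<lambda>x. H' x * indicator {c<..} x)"
      by (rule integral_completion) (use H'm in measurable)
    finally show ?thesis using HI by simp
  qed
  define M1 where "M1 = density lborel (\<lambda>x. ennreal (H' x))"
  define M2 where "M2 = density lborel (\<lambda>x. ennreal (- H' x))"
  have m1: "(\<lambda>x. ennreal (H' x)) \<in> borel_measurable lborel" using H'm by measurable
  have m2: "(\<lambda>x. ennreal (- H' x)) \<in> borel_measurable lborel" using H'm by measurable
  have em1: "emeasure M1 {c<..} = (\<integral>\<^sup>+x. ennreal (H' x * indicator {c<..} x) \<partial>lborel)" for c
  proof -
    have "emeasure M1 {c<..} = (\<integral>\<^sup>+x. ennreal (H' x) * indicator {c<..} x \<partial>lborel)"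
      unfolding M1_def by (rule emeasure_density[OF m1]) simp
    also have "\<dots> = (\<integral>\<^sup>+x. ennreal (H' x * indicator {c<..} x) \<partial>lborel)"
      by (rule nn_integral_cong) (simp split: split_indicator)
    finally show ?thesis .
  qed
  have em2: "emeasure M2 {c<..} = (\<integral>\<^sup>+x. ennreal (- (H' x * indicator {c<..} x)) \<partial>lborel)" for c
  proof -
    have "emeasure M2 {c<..} = (\<integral>\<^sup>+x. ennreal (- H' x) * indicator {c<..} x \<partial>lborel)"
      unfolding M2_def by (rule emeasure_density[OF m2]) simp
    also have "\<dots> = (\<integral>\<^sup>+x. ennreal (- (H' x * indicator {c<..} x)) \<partial>lborel)"
      by (rule nn_integral_cong) (simp split: split_indicator)
    finally show ?thesis .
  qed
  have eq: "emeasure M1 {c<..} = emeasure M2 {c<..} \<and> emeasure M1 {c<..} < \<infinity>" for c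
  proof -
    obtain r q where rq: "0 \<le> r" "0 \<le> q"
      "(\<integral>\<^sup>+x. ennreal (H' x * indicator {c<..} x) \<partial>lborel) = ennreal r"
      "(\<integral>\<^sup>+x. ennreal (- (H' x * indicator {c<..} x)) \<partial>lborel) = ennreal q"
      "(\<lambda>x. H' x * indicator {c<..} x) \<in> borel_measurable lborel"
      "integral\<^sup>L lborel (\<lambda>x. H' x * indicator {c<..} x) = r - q"
      by (rule integrableE[OF H'ic[of c]])
    then have "r = q" using H'I[of c] by simp
    then show ?thesis using em1[of c] em2[of c] rq by simp
  qed
  have "M1 = M2"
  proof (rule measure_eqI_lessThan)
    show "sets M1 = sets borel" "sets M2 = sets borel" by (simp_all add: M1_def M2_def)
    show "emeasure M1 {x<..} < \<infinity>" for x using eq[of x] by (rule conjunct2)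
    show "emeasure M1 {x<..} = emeasure M2 {x<..}" for x using eq[of x] by (rule conjunct1)
  qed
  then have "AE x in lborel. ennreal (H' x) = ennreal (- H' x)"
    unfolding M1_def M2_def by (rule sigma_finite_measure.density_unique[OF sigma_finite_lborel m1 m2])
  then have "AE x in lborel. H' x = 0" by eventually_elim (rule ennreal_eq_neg)
  with HH' have "AE x in lborel. H x = 0" by eventually_elim simp
  then have "AE x in lebesgue. H x = 0" by (rule AE_completion)
  then have "AE x in lebesgue. x \<in> Iv T \<longrightarrow> h x = 0" by eventually_elim (auto simp: H_def indicator_def)
  then show ?thesis using AE_restrict_space_iff[of "Iv T" lebesgue "\<lambda>x. h x = 0"] by simp
qed

lemma L2_integrable:
  assumes "T > 0" "L2_on (Iv T) g"
  shows "integrable (NN T) g"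
proof -
  have "bm (Iv T) (\<lambda>_. 1)" unfolding bm_def by auto
  then have "L2_on (Iv T) (\<lambda>_. 1)" by (rule bm_L2_self[OF assms(1)])
  from L2_mult_integrable[OF assms(2) this] show ?thesis by simp
qed

lemma weak_unique:
  assumes "T > 0" "L2_on (Iv T) g1" "L2_on (Iv T) g2"
    "weak_deriv_of (Iv T) k f g1" "weak_deriv_of (Iv T) k f g2"
  shows "AE x in NN T. g1 x = g2 x"
proof -
  have "AE x in NN T. g1 x - g2 x = 0"
  proof (rule fund_AE[OF assms(1)])
    show "integrable (NN T) (\<lambda>x. g1 x - g2 x)"
      using L2_integrable[OF assms(1,2)] L2_integrable[OF assms(1,3)] by (rule Bochner_Integration.integrable_diff)
    show "\<forall>\<psi>. test_fun (Iv T) \<psi> \<longrightarrow> integral\<^sup>L (NN T) (\<lambda>x. (g1 x - g2 x) * \<psi> x) = 0"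
    proof (intro allI impI)
      fix \<psi> assume t: "test_fun (Iv T) \<psi>"
      have A: "integrable (NN T) (\<lambda>x. g1 x * \<psi> x)"
        "integral\<^sup>L (NN T) (\<lambda>x. f x * (deriv ^^ k) \<psi> x) = (-1)^k * integral\<^sup>L (NN T) (\<lambda>x. g1 x * \<psi> x)"
        using assms(4) t unfolding weak_iff by blast+
      have B: "integrable (NN T) (\<lambda>x. g2 x * \<psi> x)"
        "integral\<^sup>L (NN T) (\<lambda>x. f x * (deriv ^^ k) \<psi> x) = (-1)^k * integral\<^sup>L (NN T) (\<lambda>x. g2 x * \<psi> x)"
        using assms(5) t unfolding weak_iff by blast+
      have "(-1)^k * integral\<^sup>L (NN T) (\<lambda>x. g1 x * \<psi> x) = (-1)^k * integral\<^sup>L (NN T) (\<lambda>x. g2 x * \<psi> x)"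
        using A(2) B(2) by simp
      moreover have "(-1::real)^k \<noteq> 0" by simp
      ultimately have "integral\<^sup>L (NN T) (\<lambda>x. g1 x * \<psi> x) = integral\<^sup>L (NN T) (\<lambda>x. g2 x * \<psi> x)"
        using mult_left_cancel by blast
      moreover have "integral\<^sup>L (NN T) (\<lambda>x. (g1 x - g2 x) * \<psi> x) = integral\<^sup>L (NN T) (\<lambda>x. g1 x * \<psi> x) - integral\<^sup>L (NN T) (\<lambda>x. g2 x * \<psi> x)"
        unfolding left_diff_distrib by (rule Bochner_Integration.integral_diff[OF A(1) B(1)])
      ultimately show "integral\<^sup>L (NN T) (\<lambda>x. (g1 x - g2 x) * \<psi> x) = 0" by simp
    qed
  qed
  then show ?thesis by eventually_elim simp
qed

lemma Hm_norm_eq: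
  assumes "T > 0" "\<forall>k\<le>m. L2_on (Iv T) (G k) \<and> weak_deriv_of (Iv T) k f (G k)"
  shows "Hm_norm (Iv T) m f = sqrt (\<Sum>k\<le>m. integral\<^sup>L (NN T) (\<lambda>x. (G k x)^2))"
proof -
  have "(LINT x:Iv T|lebesgue. (weak_deriv (Iv T) k f x)^2) = integral\<^sup>L (NN T) (\<lambda>x. (G k x)^2)" if k: "k \<le> m" for k
  proof -
    have Gk: "L2_on (Iv T) (G k)" "weak_deriv_of (Iv T) k f (G k)" using assms(2) k by auto
    have "\<exists>g. L2_on (Iv T) g \<and> weak_deriv_of (Iv T) k f g" using Gk by blast
    then have W: "L2_on (Iv T) (weak_deriv (Iv T) k f) \<and> weak_deriv_of (Iv T) k f (weak_deriv (Iv T) k f)"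
      unfolding weak_deriv_def by (rule someI_ex)
    have ae: "AE x in NN T. weak_deriv (Iv T) k f x = G k x"
      using weak_unique[OF assms(1) _ Gk(1) _ Gk(2)] W by blast
    have m1: "weak_deriv (Iv T) k f \<in> borel_measurable (NN T)" using W by (simp add: L2_on_iff)
    have m2: "G k \<in> borel_measurable (NN T)" using Gk by (simp add: L2_on_iff)
    have "integral\<^sup>L (NN T) (\<lambda>x. (weak_deriv (Iv T) k f x)^2) = integral\<^sup>L (NN T) (\<lambda>x. (G k x)^2)"
    proof (rule integral_cong_AE)
      show "(\<lambda>x. (weak_deriv (Iv T) k f x)^2) \<in> borel_measurable (NN T)" using m1 by measurable
      show "(\<lambda>x. (G k x)^2) \<in> borel_measurable (NN T)" using m2 by measurable
      show "AE x in NN T. (weak_deriv (Iv T) k f x)^2 = (G k x)^2" using ae by eventually_elim simp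
    qed
    then show ?thesis by (simp add: set_integral_on)
  qed
  then have "(\<Sum>k\<le>m. (LINT x:Iv T|lebesgue. (weak_deriv (Iv T) k f x)^2)) = (\<Sum>k\<le>m. integral\<^sup>L (NN T) (\<lambda>x. (G k x)^2))"
    by (intro sum.cong) auto
  then show ?thesis unfolding Hm_norm_def by simp
qed

lemma L2_abs:
  assumes "L2_on (Iv T) f"
  shows "L2_on (Iv T) (\<lambda>x. \<bar>f x\<bar>)"
proof -
  have m: "f \<in> borel_measurable (NN T)" and i: "integrable (NN T) (\<lambda>x. (f x)^2)"
    using assms by (auto simp: L2_on_iff)
  have "(\<lambda>x. \<bar>f x\<bar>) \<in> borel_measurable (NN T)" using m by measurable
  then show ?thesis using i by (simp add: L2_on_iff)
qed

lemma Hf_bound: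
  assumes "\<forall>l\<le>k. \<bar>A l x\<bar> \<le> 1"
  shows "\<bar>Hf A g k x\<bar> \<le> (\<Sum>i\<le>k. real (k choose i) * \<bar>g i x\<bar>)"
proof -
  have "\<bar>Hf A g k x\<bar> \<le> (\<Sum>i\<le>k. \<bar>real (k choose i) * (A (k - i) x * g i x)\<bar>)"
    unfolding Hf_def by (rule sum_abs)
  also have "\<dots> \<le> (\<Sum>i\<le>k. real (k choose i) * \<bar>g i x\<bar>)"
  proof (rule sum_mono)
    fix i assume "i \<in> {..k}"
    then have "\<bar>A (k - i) x\<bar> \<le> 1" using assms by simp
    then have "\<bar>A (k - i) x\<bar> * \<bar>g i x\<bar> \<le> 1 * \<bar>g i x\<bar>" by (intro mult_right_mono) simp_all
    then show "\<bar>real (k choose i) * (A (k - i) x * g i x)\<bar> \<le> real (k choose i) * \<bar>g i x\<bar>"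
      by (simp add: abs_mult mult_left_mono)
  qed
  finally show ?thesis .
qed

lemma Hf_conv:
  assumes "T > 0" "\<And>j. sfam UNIV (A j)" "\<And>j l x. l \<le> k \<Longrightarrow> \<bar>A j l x\<bar> \<le> 1"
    "\<And>x. eventually (\<lambda>j. \<forall>l\<le>k. A j l x = 0) sequentially"
    "\<forall>i\<le>k. L2_on (Iv T) (g i)"
  shows "(\<lambda>j. integral\<^sup>L (NN T) (\<lambda>x. (Hf (A j) g k x)^2)) \<longlonglongrightarrow> 0"
proof -
  define G where "G x = (\<Sum>i\<le>k. real (k choose i) * \<bar>g i x\<bar>)" for x
  have GL: "L2_on (Iv T) G"
  proof -
    have "L2_on (Iv T) (\<lambda>x. \<Sum>i\<le>k. real (k choose i) * \<bar>g i x\<bar>)"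
      using assms(5) by (intro L2_sum L2_cmult L2_abs ballI) auto
    then show ?thesis by (simp add: G_def[abs_def])
  qed
  have "(\<lambda>j. integral\<^sup>L (NN T) (\<lambda>x. (Hf (A j) g k x)^2)) \<longlonglongrightarrow> integral\<^sup>L (NN T) (\<lambda>x. 0::real)"
  proof (rule integral_dominated_convergence[where w="\<lambda>x. (G x)^2"])
    show "(\<lambda>x. 0::real) \<in> borel_measurable (NN T)" by simp
    show "(\<lambda>x. (Hf (A j) g k x)^2) \<in> borel_measurable (NN T)" for j
    proof -
      have "L2_on (Iv T) (Hf (A j) g k)" by (rule Hf_L2[OF assms(2)]) (use assms(5) in auto)
      then have "Hf (A j) g k \<in> borel_measurable (NN T)" by (simp add: L2_on_iff)
      then show ?thesis by measurable
    qed
    show "integrable (NN T) (\<lambda>x. (G x)^2)" using GL by (simp add: L2_on_iff)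
    show "AE x in NN T. (\<lambda>j. (Hf (A j) g k x)^2) \<longlonglongrightarrow> 0"
    proof (rule AE_I2)
      fix x
      have "eventually (\<lambda>j. (Hf (A j) g k x)^2 = 0) sequentially"
        using assms(4)[of x] by eventually_elim (simp add: Hf_def)
      then show "(\<lambda>j. (Hf (A j) g k x)^2) \<longlonglongrightarrow> 0" by (rule tendsto_eventually)
    qed
    show "AE x in NN T. norm ((Hf (A j) g k x)^2) \<le> (G x)^2" for j
    proof (rule AE_I2)
      fix x
      have "\<bar>Hf (A j) g k x\<bar> \<le> G x" unfolding G_def by (rule Hf_bound) (use assms(3) in auto)
      then have "\<bar>Hf (A j) g k x\<bar>^2 \<le> (G x)^2" by (intro power_mono) simp_all
      then show "norm ((Hf (A j) g k x)^2) \<le> (G x)^2" by simp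
    qed
  qed
  then show ?thesis by simp
qed

definition Mb :: "nat \<Rightarrow> real" where "Mb k = (SOME M. \<forall>t. \<bar>bfam k t\<bar> \<le> M)"

lemma Mb: "\<bar>bfam k t\<bar> \<le> Mb k"
  using someI_ex[OF bfam_bounded[of k]] unfolding Mb_def by blast

lemma Mb_nonneg: "0 \<le> Mb k"
  using Mb[of k 0] by linarith

definition cc :: "nat \<Rightarrow> real" where "cc r = 1 / (1 + (\<Sum>k\<le>r. Mb k))"

lemma cc_pos: "cc r > 0"
proof -
  have "0 \<le> (\<Sum>k\<le>r. Mb k)" by (intro sum_nonneg Mb_nonneg)
  then show ?thesis by (simp add: cc_def)
qed

lemma cc_sum: "cc r * (\<Sum>k\<le>r. Mb k) \<le> 1"
proof -
  have "0 \<le> (\<Sum>k\<le>r. Mb k)" by (intro sum_nonneg Mb_nonneg)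
  then show ?thesis by (simp add: cc_def field_simps)
qed

lemma cc_Mb: "k \<le> r \<Longrightarrow> cc r * Mb k \<le> 1"
proof -
  assume k: "k \<le> r"
  have "Mb k \<le> (\<Sum>k\<le>r. Mb k)" by (rule member_le_sum) (use k Mb_nonneg in auto)
  moreover have "0 \<le> cc r" using cc_pos[of r] by (rule less_imp_le)
  ultimately have "cc r * Mb k \<le> cc r * (\<Sum>k\<le>r. Mb k)" by (rule mult_left_mono)
  then show ?thesis using cc_sum[of r] by linarith
qed

definition sj :: "real \<Rightarrow> nat \<Rightarrow> real" where "sj T j = real (Suc j) * (1 + 4 / T)"

lemma sj_ge1: "T > 0 \<Longrightarrow> sj T j \<ge> 1"
proof -
  assume T: "T > 0"
  have "1 \<le> 1 + 4 / T" using T by simp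
  moreover have "1 \<le> real (Suc j)" by simp
  ultimately have "1 * 1 \<le> real (Suc j) * (1 + 4 / T)" by (intro mult_mono) auto
  then show ?thesis by (simp add: sj_def)
qed

lemma sj_inv: "T > 0 \<Longrightarrow> 1 / sj T j < T / 2"
proof -
  assume T: "T > 0"
  have "1 + 4 / T \<le> sj T j"
  proof -
    have "1 * (1 + 4 / T) \<le> real (Suc j) * (1 + 4 / T)" using T by (intro mult_right_mono) auto
    then show ?thesis by (simp add: sj_def)
  qed
  moreover have "1 + 4 / T > 2 / T" using T by (simp add: field_simps)
  ultimately have "sj T j > 2 / T" by linarith
  have sp: "sj T j > 0" using sj_ge1[OF T, of j] by linarith
  have "T * sj T j > T * (2 / T)" using \<open>sj T j > 2 / T\<close> T by (intro mult_strict_left_mono)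
  then have "T * sj T j > 2" using T by simp
  then show ?thesis using sp T by (simp add: field_simps)
qed

lemma sj_lim: "T > 0 \<Longrightarrow> eventually (\<lambda>j. sj T j * y \<ge> 1) sequentially" if "y > 0"
proof -
  assume T: "T > 0"
  obtain N :: nat where N: "real N > 1 / y" using reals_Archimedean2 by blast
  show ?thesis
    unfolding eventually_sequentially
  proof (intro exI allI impI)
    fix j assume "N \<le> j"
    then have "real (Suc j) > 1 / y" using N by linarith
    then have "real (Suc j) * y > 1" using that by (simp add: field_simps)
    moreover have "real (Suc j) * y \<le> real (Suc j) * y * (1 + 4 / T)"
      using T that by (simp add: mult_le_cancel_left1 mult.assoc)
    ultimately show "sj T j * y \<ge> 1" by (simp add: sj_def algebra_simps)
  qed
qed

definition Af :: "real \<Rightarrow> nat \<Rightarrow> nat \<Rightarrow> nat \<Rightarrow> real \<Rightarrow> real" where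
  "Af T r j = afam (cc r / (sj T j)^r) (sj T j) (- sj T j * (T / 2)) bfam"

lemma Af_val: "Af T r j k x = cc r / (sj T j)^r * (sj T j)^k * bfam k (sj T j * (x - T / 2))"
  by (simp add: Af_def afam_def algebra_simps)

lemma sfam_Af: "sfam UNIV (Af T r j)"
  unfolding Af_def by (intro sfam_affine sfam_bfam)

lemma Af_bound:
  assumes "T > 0" "k \<le> r"
  shows "\<bar>Af T r j k x\<bar> \<le> cc r * Mb k"
proof -
  let ?s = "sj T j"
  have s1: "?s \<ge> 1" by (rule sj_ge1[OF assms(1)])
  have "?s^k \<le> ?s^r" by (rule power_increasing[OF assms(2) s1])
  then have q: "?s^k / ?s^r \<le> 1" using s1 by simp
  have "\<bar>Af T r j k x\<bar> = cc r * (?s^k / ?s^r) * \<bar>bfam k (?s * (x - T / 2))\<bar>"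
    using cc_pos[of r] s1 by (simp add: Af_val abs_mult)
  also have "\<dots> \<le> cc r * 1 * Mb k"
    using cc_pos[of r] q s1 Mb[of k] by (intro mult_mono) auto
  finally show ?thesis by simp
qed

lemma Af_bound1: "T > 0 \<Longrightarrow> k \<le> r \<Longrightarrow> \<bar>Af T r j k x\<bar> \<le> 1"
  using Af_bound cc_Mb by (meson order_trans)

lemma Af_eventually_zero:
  assumes "T > 0"
  shows "eventually (\<lambda>j. \<forall>l\<le>k. Af T r j l x = 0) sequentially"
proof (cases "x \<le> T / 2")
  case True
  have "Af T r j l x = 0" for j l
  proof -
    have "sj T j * (x - T / 2) \<le> 0" using True sj_ge1[OF assms, of j] by (simp add: mult_nonneg_nonpos)
    then show ?thesis by (simp add: Af_val bfam_out)
  qed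
  then show ?thesis by simp
next
  case False
  then have "x - T / 2 > 0" by simp
  from sj_lim[OF this assms] show ?thesis
    by eventually_elim (simp add: Af_val bfam_out)
qed

lemma Af_test:
  assumes "T > 0"
  shows "test_fun (Iv T) (Af T r j 0)"
proof (rule test_fun_of_sfam[OF sfam_Af])
  let ?s = "sj T j"
  have s1: "?s \<ge> 1" by (rule sj_ge1[OF assms])
  show "T / 2 \<le> x \<and> x \<le> T / 2 + 1 / ?s" if "Af T r j 0 x \<noteq> 0" for x
  proof -
    have "bfam 0 (?s * (x - T / 2)) \<noteq> 0" using that by (auto simp: Af_val)
    then have "0 < ?s * (x - T / 2)" "?s * (x - T / 2) < 1" using bfam0_ne by blast+
    then show ?thesis using s1 by (simp add: field_simps zero_less_mult_iff)
  qed
  show "0 < T / 2" using assms by simp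
  show "T / 2 + 1 / ?s < T" using sj_inv[OF assms, of j] by simp
qed

lemma Af_deriv: "(deriv ^^ k) (Af T r j 0) = Af T r j k"
  using sfam_deriv[OF open_UNIV sfam_Af[of T r j]] by auto

lemma W_Af: "W_inf_norm (Iv T) r (Af T r j 0) = (\<Sum>k\<le>r. (SUP x\<in>Iv T. \<bar>Af T r j k x\<bar>))"
  unfolding W_inf_norm_def Af_deriv ..

lemma Af_bdd: "T > 0 \<Longrightarrow> k \<le> r \<Longrightarrow> bdd_above ((\<lambda>x. \<bar>Af T r j k x\<bar>) ` Iv T)"
  using Af_bound1 by (intro bdd_aboveI2) blast

lemma W_upper:
  assumes "T > 0"
  shows "W_inf_norm (Iv T) r (Af T r j 0) \<le> 1"
proof -
  have ne: "Iv T \<noteq> {}" using assms by simp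
  have "(SUP x\<in>Iv T. \<bar>Af T r j k x\<bar>) \<le> cc r * Mb k" if "k \<le> r" for k
    by (rule cSUP_least[OF ne]) (rule Af_bound[OF assms that])
  then have "(\<Sum>k\<le>r. (SUP x\<in>Iv T. \<bar>Af T r j k x\<bar>)) \<le> (\<Sum>k\<le>r. cc r * Mb k)"
    by (intro sum_mono) auto
  also have "\<dots> = cc r * (\<Sum>k\<le>r. Mb k)" by (simp add: sum_distrib_left)
  also have "\<dots> \<le> 1" by (rule cc_sum)
  finally show ?thesis by (simp add: W_Af)
qed

lemma W_lower:
  assumes "T > 0" "bfam r t0 \<noteq> 0"
  shows "cc r * \<bar>bfam r t0\<bar> \<le> W_inf_norm (Iv T) r (Af T r j 0)"
proof -
  let ?s = "sj T j"
  have s1: "?s \<ge> 1" by (rule sj_ge1[OF assms(1)])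
  have t0: "0 < t0" "t0 < 1" using assms(2) bfam_out[of t0 r] by (auto simp: not_le[symmetric])
  define xs where "xs = T / 2 + t0 / ?s"
  have "t0 / ?s < 1 / ?s" using t0 s1 by (intro divide_strict_right_mono) auto
  then have a: "t0 / ?s < T / 2" using sj_inv[OF assms(1), of j] by linarith
  have b: "0 < t0 / ?s" using t0 s1 by simp
  have "xs < T" unfolding xs_def using a by linarith
  moreover have "0 < xs" unfolding xs_def using b assms(1) by linarith
  ultimately have xs: "xs \<in> Iv T" by simp
  have "Af T r j r xs = cc r * bfam r t0"
    using s1 by (simp add: Af_val xs_def field_simps)
  then have "cc r * \<bar>bfam r t0\<bar> = \<bar>Af T r j r xs\<bar>" using cc_pos[of r] by (simp add: abs_mult)
  also have "\<dots> \<le> (SUP x\<in>Iv T. \<bar>Af T r j r x\<bar>)"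
    by (rule cSUP_upper[OF xs Af_bdd[OF assms(1)]]) simp
  also have "\<dots> \<le> (\<Sum>k\<le>r. (SUP x\<in>Iv T. \<bar>Af T r j k x\<bar>))"
  proof (rule member_le_sum)
    show "r \<in> {..r}" by simp
    show "finite {..r}" by simp
    fix k assume "k \<in> {..r} - {r}"
    then have k: "k \<le> r" by simp
    have "0 \<le> \<bar>Af T r j k xs\<bar>" by simp
    also have "\<dots> \<le> (SUP x\<in>Iv T. \<bar>Af T r j k x\<bar>)"
      by (rule cSUP_upper[OF xs Af_bdd[OF assms(1) k]])
    finally show "0 \<le> (SUP x\<in>Iv T. \<bar>Af T r j k x\<bar>)" .
  qed
  finally show ?thesis by (simp add: W_Af)
qed

theorem lemma3p4:
  fixes T :: real and r :: nat
  assumes "T > 0"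
  shows "\<exists>\<gamma>>0. \<exists>\<alpha> :: nat \<Rightarrow> real \<Rightarrow> real.
           (\<forall>j. test_fun {0<..<T} (\<alpha> j) \<and>
                \<gamma> \<le> W_inf_norm {0<..<T} r (\<alpha> j) \<and> W_inf_norm {0<..<T} r (\<alpha> j) \<le> 1) \<and>
           (\<forall>m\<le>r. \<forall>\<phi>. in_Hm {0<..<T} m \<phi> \<longrightarrow>
              (\<forall>j. in_Hm {0<..<T} m (\<lambda>x. \<alpha> j x * \<phi> x)) \<and>
              (\<lambda>j. Hm_norm {0<..<T} m (\<lambda>x. \<alpha> j x * \<phi> x)) \<longlonglongrightarrow> 0)"
proof -
  obtain t0 where t0: "bfam r t0 \<noteq> 0" using bfam_nonzero by blast
  define \<gamma> where "\<gamma> = cc r * \<bar>bfam r t0\<bar>"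
  have gpos: "\<gamma> > 0" using cc_pos[of r] t0 by (simp add: \<gamma>_def)
  define \<alpha> where "\<alpha> j = Af T r j 0" for j
  have P1: "\<forall>j. test_fun {0<..<T} (\<alpha> j) \<and> \<gamma> \<le> W_inf_norm {0<..<T} r (\<alpha> j) \<and> W_inf_norm {0<..<T} r (\<alpha> j) \<le> 1"
    using Af_test[OF assms] W_lower[OF assms t0] W_upper[OF assms] by (simp add: \<alpha>_def \<gamma>_def)
  have P2: "(\<forall>j. in_Hm {0<..<T} m (\<lambda>x. \<alpha> j x * \<phi> x)) \<and>
              (\<lambda>j. Hm_norm {0<..<T} m (\<lambda>x. \<alpha> j x * \<phi> x)) \<longlonglongrightarrow> 0"
    if m: "m \<le> r" and phi: "in_Hm {0<..<T} m \<phi>" for m \<phi>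
  proof
    show "\<forall>j. in_Hm {0<..<T} m (\<lambda>x. \<alpha> j x * \<phi> x)"
      using prod_in_Hm[OF assms sfam_Af phi] by (simp add: \<alpha>_def)
    have eqn: "Hm_norm {0<..<T} m (\<lambda>x. \<alpha> j x * \<phi> x)
        = sqrt (\<Sum>k\<le>m. integral\<^sup>L (NN T) (\<lambda>x. (Hf (Af T r j) (gfun T \<phi>) k x)^2))" for j
      unfolding \<alpha>_def
      by (rule Hm_norm_eq[OF assms]) (use prod_weak[OF assms sfam_Af phi] in blast)
    have "(\<lambda>j. integral\<^sup>L (NN T) (\<lambda>x. (Hf (Af T r j) (gfun T \<phi>) k x)^2)) \<longlonglongrightarrow> 0" if k: "k \<le> m" for k
    proof (rule Hf_conv[OF assms sfam_Af])
      show "\<bar>Af T r j l x\<bar> \<le> 1" if "l \<le> k" for j l x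
        using Af_bound1[OF assms] that k m by simp
      show "eventually (\<lambda>j. \<forall>l\<le>k. Af T r j l x = 0) sequentially" for x
        by (rule Af_eventually_zero[OF assms])
      show "\<forall>i\<le>k. L2_on (Iv T) (gfun T \<phi> i)"
        using gfun_props[OF assms phi] k by auto
    qed
    then have "(\<lambda>j. \<Sum>k\<le>m. integral\<^sup>L (NN T) (\<lambda>x. (Hf (Af T r j) (gfun T \<phi>) k x)^2)) \<longlonglongrightarrow> (\<Sum>k\<le>m. 0)"
      by (intro tendsto_sum) auto
    then have "(\<lambda>j. sqrt (\<Sum>k\<le>m. integral\<^sup>L (NN T) (\<lambda>x. (Hf (Af T r j) (gfun T \<phi>) k x)^2))) \<longlonglongrightarrow> sqrt 0"
      by (intro tendsto_real_sqrt) simp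
    then show "(\<lambda>j. Hm_norm {0<..<T} m (\<lambda>x. \<alpha> j x * \<phi> x)) \<longlonglongrightarrow> 0"
      unfolding eqn by simp
  qed
  show ?thesis using gpos P1 P2 by blast
qed

end
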